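(* Let $c_0,\delta,\tilde\beta$ be positive constants, $m$ a real constant (the cases $m=\tfrac12$ and $m=1$ correspond to cylindrical and spherical geometry), and $F$ a smooth real function with $F''\neq 0$. Consider the generalized KZK equation $$E:=c_0^4\Big(p_{rr}+\frac{2m\,p_r}{r}\Big)+\delta p_{ttt}+\tilde\beta\,F(p)_{tt}-2c_0^3p_{zt}=0$$ for $p(r,z,t)$, $r>0$. A function $\Lambda(r,z,t,p,p_r,p_z,p_t)$ is a multiplier, i.e. $\mathcal{E}_p[\Lambda E]=0$ identically, if and only if $\Lambda=\phi(r,z)+t\,\psi(r,z)$ with $$\phi_{rr}-\frac{2m}{r}\phi_r+\frac{2m}{r^2}\phi=\frac{2}{c_0}\psi_z,\qquad \psi_{rr}-\frac{2m}{r}\psi_r+\frac{2m}{r^2}\psi=0.$$ For any such $\phi,\psi$, every smooth solution $p$ of $E=0$ satisfies $\partial_tT^t+\partial_rT^r+\partial_zT^z=0$ with $$T^t=(\phi+t\psi)\big(\delta p_{tt}+\tilde\beta F'(p)p_t-2c_0^3p_z\big)-\psi\big(\delta p_t+\tilde\beta F(p)\big),$$ $$T^r=c_0^4\Big((\phi+t\psi)\big(p_r+\tfrac{2mp}{r}\big)-p(\phi_r+t\psi_r)\Big),\qquad T^z=2c_0^3p\psi.$$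
   Context: $\mathcal{E}_p$ is the Euler (variational) operator with respect to $p$ on the jet space in the variables $(r,z,t)$, built from total derivatives; $\Lambda E$ is a total divergence iff $\mathcal{E}_p[\Lambda E]=0$ identically. Subscripts denote partial derivatives. *)

theory Defs
  imports "HOL-Analysis.Analysis"
begin

definition pdir :: "'a::euclidean_space \<Rightarrow> ('a \<Rightarrow> real) \<Rightarrow> 'a \<Rightarrow> real" where
  "pdir i f x = deriv (\<lambda>s. f (x + s *\<^sub>R i)) 0"

fun iterpd :: "'a::euclidean_space list \<Rightarrow> ('a \<Rightarrow> real) \<Rightarrow> 'a \<Rightarrow> real" where
  "iterpd [] f = f"
| "iterpd (i # is) f = pdir i (iterpd is f)"

definition Cinf_on :: "'a::euclidean_space set \<Rightarrow> ('a \<Rightarrow> real) \<Rightarrow> bool" where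
  "Cinf_on U f \<longleftrightarrow> (\<forall>is. set is \<subseteq> Basis \<longrightarrow>
      continuous_on U (iterpd is f) \<and>
      (\<forall>i\<in>Basis. \<forall>x\<in>U. (\<lambda>s. iterpd is f (x + s *\<^sub>R i)) differentiable (at 0)))"

text \<open>A point is (r,z,t). A jet assigns to each multi-index (a,b,c) the value of
  the derivative of p of order a in r, b in z, c in t. A differential function
  is a function of the point and of the jet.\<close>

type_synonym pt = "real \<times> real \<times> real"
type_synonym jet = "nat \<times> nat \<times> nat \<Rightarrow> real"
type_synonym dfun = "pt \<Rightarrow> jet \<Rightarrow> real"

definition jord :: "nat \<times> nat \<times> nat \<Rightarrow> nat" where
  "jord J = (case J of (a, b, c) \<Rightarrow> a + b + c)"

definition depends_upto :: "nat \<Rightarrow> dfun \<Rightarrow> bool" where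
  "depends_upto n L \<longleftrightarrow> (\<forall>x u v. (\<forall>J. jord J \<le> n \<longrightarrow> u J = v J) \<longrightarrow> L x u = L x v)"

definition dord :: "dfun \<Rightarrow> nat" where
  "dord L = (LEAST n. depends_upto n L)"

definition pu :: "nat \<times> nat \<times> nat \<Rightarrow> dfun \<Rightarrow> dfun" where
  "pu J L x u = deriv (\<lambda>s. L x (u(J := s))) (u J)"

definition px :: "nat \<Rightarrow> dfun \<Rightarrow> dfun" where
  "px i L x u = (case x of (r, z, t) \<Rightarrow>
     if i = 0 then deriv (\<lambda>s. L (s, z, t) u) r
     else if i = 1 then deriv (\<lambda>s. L (r, s, t) u) z
     else deriv (\<lambda>s. L (r, z, s) u) t)"

definition shift :: "nat \<Rightarrow> nat \<times> nat \<times> nat \<Rightarrow> nat \<times> nat \<times> nat" where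
  "shift i J = (case J of (a, b, c) \<Rightarrow>
     if i = 0 then (Suc a, b, c) else if i = 1 then (a, Suc b, c) else (a, b, Suc c))"

text \<open>Total derivative D_r (i=0), D_z (i=1), D_t (i=2).\<close>
definition Dtot :: "nat \<Rightarrow> dfun \<Rightarrow> dfun" where
  "Dtot i L x u = px i L x u + (\<Sum>J\<in>{J. jord J \<le> dord L}. u (shift i J) * pu J L x u)"

definition Dmulti :: "nat \<times> nat \<times> nat \<Rightarrow> dfun \<Rightarrow> dfun" where
  "Dmulti J L = (case J of (a, b, c) \<Rightarrow> (Dtot 0 ^^ a) ((Dtot 1 ^^ b) ((Dtot 2 ^^ c) L)))"

definition euler :: "dfun \<Rightarrow> dfun" where
  "euler L x u = (\<Sum>J\<in>{J. jord J \<le> dord L}. (-1) ^ jord J * Dmulti J (pu J L) x u)"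

definition kzkE :: "real \<Rightarrow> real \<Rightarrow> real \<Rightarrow> real \<Rightarrow> (real \<Rightarrow> real) \<Rightarrow> dfun" where
  "kzkE c0 dl bt m F = (\<lambda>x u.
      c0 ^ 4 * (u (2, 0, 0) + 2 * m * u (1, 0, 0) / fst x) + dl * u (0, 0, 3)
      + bt * Dtot 2 (Dtot 2 (\<lambda>y v. F (v (0, 0, 0)))) x u
      - 2 * c0 ^ 3 * u (0, 1, 1))"

definition is_multiplier ::
  "real \<Rightarrow> real \<Rightarrow> real \<Rightarrow> real \<Rightarrow> (real \<Rightarrow> real) \<Rightarrow>
   (pt \<times> (real \<times> real \<times> real \<times> real) \<Rightarrow> real) \<Rightarrow> bool" where
  "is_multiplier c0 dl bt m F Lam \<longleftrightarrow>
     (\<forall>x u. fst x > 0 \<longrightarrow>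
        euler (\<lambda>y v. Lam (y, (v (0,0,0), v (1,0,0), v (0,1,0), v (0,0,1))) * kzkE c0 dl bt m F y v) x u = 0)"

definition d_r :: "(pt \<Rightarrow> real) \<Rightarrow> pt \<Rightarrow> real" where
  "d_r f x = (case x of (r, z, t) \<Rightarrow> deriv (\<lambda>s. f (s, z, t)) r)"
definition d_z :: "(pt \<Rightarrow> real) \<Rightarrow> pt \<Rightarrow> real" where
  "d_z f x = (case x of (r, z, t) \<Rightarrow> deriv (\<lambda>s. f (r, s, t)) z)"
definition d_t :: "(pt \<Rightarrow> real) \<Rightarrow> pt \<Rightarrow> real" where
  "d_t f x = (case x of (r, z, t) \<Rightarrow> deriv (\<lambda>s. f (r, z, s)) t)"

definition d2_r :: "(real \<times> real \<Rightarrow> real) \<Rightarrow> real \<times> real \<Rightarrow> real" where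
  "d2_r f w = (case w of (r, z) \<Rightarrow> deriv (\<lambda>s. f (s, z)) r)"
definition d2_z :: "(real \<times> real \<Rightarrow> real) \<Rightarrow> real \<times> real \<Rightarrow> real" where
  "d2_z f w = (case w of (r, z) \<Rightarrow> deriv (\<lambda>s. f (r, s)) z)"

end

theory Submission
  imports Defs
begin

definition dep :: "(nat \<times> nat \<times> nat) set \<Rightarrow> dfun \<Rightarrow> bool" where
  "dep S M \<longleftrightarrow> (\<forall>x u v. (\<forall>J\<in>S. u J = v J) \<longrightarrow> M x u = M x v)"

definition agree :: "dfun \<Rightarrow> dfun \<Rightarrow> bool" where
  "agree M M' \<longleftrightarrow> (\<forall>x u. fst x > 0 \<longrightarrow> M x u = M' x u)"

definition shS :: "nat \<Rightarrow> (nat \<times> nat \<times> nat) set \<Rightarrow> (nat \<times> nat \<times> nat) set" where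
  "shS i S = S \<union> shift i ` S"

lemma deriv_const0[simp]: "deriv (\<lambda>s. c) x = (0::real)"
  by (rule DERIV_imp_deriv) (rule DERIV_const)

lemma dep_upd: "dep S M \<Longrightarrow> K \<notin> S \<Longrightarrow> M x (u(K:=s)) = M x u"
  unfolding dep_def by (metis fun_upd_other)

lemma dep_mono: "dep S M \<Longrightarrow> S \<subseteq> S' \<Longrightarrow> dep S' M"
  unfolding dep_def by blast

lemma shift_inj: "shift i J = shift i J' \<Longrightarrow> J = J'"
  by (cases J; cases J') (auto simp: shift_def split: if_splits)

lemma shift_neq: "shift i J \<noteq> J"
  by (cases J) (auto simp: shift_def)

lemma finite_jord: "finite {J. jord J \<le> n}"
proof -
  have "{J. jord J \<le> n} \<subseteq> {..n} \<times> {..n} \<times> {..n}"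
    by (auto simp: jord_def)
  thus ?thesis by (rule finite_subset) auto
qed

lemma dep_depends_upto:
  assumes "finite S" "dep S M"
  shows "depends_upto (\<Sum>J\<in>S. jord J) M"
  unfolding depends_upto_def
proof (intro allI impI)
  fix x :: pt and u v :: jet assume h: "\<forall>J. jord J \<le> (\<Sum>J\<in>S. jord J) \<longrightarrow> u J = v J"
  have "\<forall>J\<in>S. u J = v J"
  proof
    fix J assume "J \<in> S"
    hence "jord J \<le> (\<Sum>J\<in>S. jord J)" using assms(1) by (intro member_le_sum) auto
    thus "u J = v J" using h by blast
  qed
  thus "M x u = M x v" using assms(2) unfolding dep_def by blast
qed

lemma depends_upto_dord:
  assumes "finite S" "dep S M"
  shows "depends_upto (dord M) M"
  unfolding dord_def by (rule LeastI_ex) (use dep_depends_upto[OF assms] in blast)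

lemma pu_zero_dep: "dep S M \<Longrightarrow> J \<notin> S \<Longrightarrow> pu J M x u = 0"
  unfolding pu_def by (simp add: dep_upd)

lemma pu_zero_upto: "depends_upto n M \<Longrightarrow> \<not> jord J \<le> n \<Longrightarrow> pu J M x u = 0"
proof -
  assume a: "depends_upto n M" "\<not> jord J \<le> n"
  have "\<And>s. M x (u(J:=s)) = M x u"
    using a unfolding depends_upto_def by (metis fun_upd_other)
  thus ?thesis unfolding pu_def by simp
qed

lemma Dtot_S:
  assumes "finite S" "dep S M"
  shows "Dtot i M x u = px i M x u + (\<Sum>J\<in>S. u (shift i J) * pu J M x u)"
proof -
  let ?D = "{J. jord J \<le> dord M}"
  have du: "depends_upto (dord M) M" by (rule depends_upto_dord[OF assms])
  have fD: "finite ?D" by (rule finite_jord)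
  have "(\<Sum>J\<in>?D. u (shift i J) * pu J M x u) = (\<Sum>J\<in>?D \<inter> S. u (shift i J) * pu J M x u)"
    by (rule sum.mono_neutral_right[OF fD]) (auto simp: pu_zero_dep[OF assms(2)])
  also have "\<dots> = (\<Sum>J\<in>S. u (shift i J) * pu J M x u)"
  proof (rule sum.mono_neutral_left[OF assms(1)])
    show "\<forall>J\<in>S - ?D \<inter> S. u (shift i J) * pu J M x u = 0"
    proof
      fix J assume "J \<in> S - ?D \<inter> S"
      hence "\<not> jord J \<le> dord M" by blast
      thus "u (shift i J) * pu J M x u = 0" by (simp add: pu_zero_upto[OF du])
    qed
  qed auto
  finally show ?thesis unfolding Dtot_def by simp
qed

lemma Dtot_zero: "Dtot i (\<lambda>x u. 0) = (\<lambda>x u. 0)"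
  by (intro ext) (auto simp: Dtot_def px_def pu_def split: prod.splits)

lemma Dtot_pow_zero: "(Dtot i ^^ n) (\<lambda>x u. 0) = (\<lambda>x u. 0)"
  by (induction n) (simp_all add: Dtot_zero)

lemma Dmulti_zero: "Dmulti J (\<lambda>x u. 0) = (\<lambda>x u. 0)"
  by (cases J) (simp add: Dmulti_def Dtot_pow_zero)

lemma euler_S:
  assumes "finite S" "dep S L"
  shows "euler L x u = (\<Sum>J\<in>S. (-1) ^ jord J * Dmulti J (pu J L) x u)"
proof -
  let ?D = "{J. jord J \<le> dord L}"
  have du: "depends_upto (dord L) L" by (rule depends_upto_dord[OF assms])
  have z1: "pu J L = (\<lambda>x u. 0)" if "J \<notin> S" for J
    using pu_zero_dep[OF assms(2) that] by (intro ext) simp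
  have z2: "pu J L = (\<lambda>x u. 0)" if "\<not> jord J \<le> dord L" for J
    using pu_zero_upto[OF du that] by (intro ext) simp
  have "(\<Sum>J\<in>?D. (-1) ^ jord J * Dmulti J (pu J L) x u) = (\<Sum>J\<in>?D \<inter> S. (-1) ^ jord J * Dmulti J (pu J L) x u)"
    by (rule sum.mono_neutral_right[OF finite_jord]) (auto simp: z1 Dmulti_zero)
  also have "\<dots> = (\<Sum>J\<in>S. (-1) ^ jord J * Dmulti J (pu J L) x u)"
  proof (rule sum.mono_neutral_left[OF assms(1)])
    show "\<forall>J\<in>S - ?D \<inter> S. (-1) ^ jord J * Dmulti J (pu J L) x u = 0"
    proof
      fix J assume "J \<in> S - ?D \<inter> S"
      hence "\<not> jord J \<le> dord L" by blast
      thus "(-1) ^ jord J * Dmulti J (pu J L) x u = 0" by (simp add: z2 Dmulti_zero)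
    qed
  qed auto
  finally show ?thesis unfolding euler_def by simp
qed

lemma dep_px: "dep S M \<Longrightarrow> dep S (px i M)"
  unfolding dep_def
proof (intro allI impI)
  fix x :: pt and u v :: jet
  assume d: "\<forall>x u v. (\<forall>J\<in>S. u J = v J) \<longrightarrow> M x u = M x v" and h: "\<forall>J\<in>S. u J = v J"
  obtain r z t where x: "x = (r,z,t)" by (cases x) auto
  have e: "\<And>y. M y u = M y v" using d h by blast
  have e1: "(\<lambda>s. M (s, z, t) u) = (\<lambda>s. M (s, z, t) v)" "(\<lambda>s. M (r, s, t) u) = (\<lambda>s. M (r, s, t) v)"
     "(\<lambda>s. M (r, z, s) u) = (\<lambda>s. M (r, z, s) v)" using e by auto
  show "px i M x u = px i M x v" unfolding px_def x by (simp only: e1 prod.case)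
qed

lemma dep_pu: "dep S M \<Longrightarrow> dep S (pu J M)"
proof -
  assume d: "dep S M"
  show ?thesis unfolding dep_def
  proof (intro allI impI)
    fix x :: pt and u v :: jet assume h: "\<forall>J\<in>S. u J = v J"
    show "pu J M x u = pu J M x v"
    proof (cases "J \<in> S")
      case True
      have "\<And>s. M x (u(J:=s)) = M x (v(J:=s))"
      proof -
        fix s
        have "\<forall>K\<in>S. (u(J:=s)) K = (v(J:=s)) K" using h by simp
        thus "M x (u(J:=s)) = M x (v(J:=s))" using d unfolding dep_def by blast
      qed
      thus ?thesis using True h unfolding pu_def by simp
    next
      case False thus ?thesis using pu_zero_dep[OF d] by simp
    qed
  qed
qed

lemma dep_Dtot:
  assumes "finite S" "dep S M"
  shows "dep (shS i S) (Dtot i M)"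
  unfolding dep_def
proof (intro allI impI)
  fix x :: pt and u v :: jet assume h: "\<forall>J\<in>shS i S. u J = v J"
  have h1: "\<forall>J\<in>S. u J = v J" using h by (auto simp: shS_def)
  have "px i M x u = px i M x v" using dep_px[OF assms(2)] h1 unfolding dep_def by blast
  moreover have "(\<Sum>J\<in>S. u (shift i J) * pu J M x u) = (\<Sum>J\<in>S. v (shift i J) * pu J M x v)"
  proof (rule sum.cong[OF refl])
    fix J assume "J \<in> S"
    hence "u (shift i J) = v (shift i J)" using h by (auto simp: shS_def)
    moreover have "pu J M x u = pu J M x v" using dep_pu[OF assms(2)] h1 unfolding dep_def by blast
    ultimately show "u (shift i J) * pu J M x u = v (shift i J) * pu J M x v" by simp
  qed
  ultimately show "Dtot i M x u = Dtot i M x v"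
    by (simp only: Dtot_S[OF assms])
qed

lemma finite_shS: "finite S \<Longrightarrow> finite (shS i S)"
  by (simp add: shS_def)

lemma dep_Dtot_pow:
  assumes "finite S" "dep S M"
  shows "finite ((shS i ^^ n) S) \<and> dep ((shS i ^^ n) S) ((Dtot i ^^ n) M)"
  by (induction n) (auto simp: assms finite_shS dep_Dtot)

lemma dep_Dmulti:
  assumes "finite S" "dep S M"
  shows "dep ((shS 0 ^^ a) ((shS 1 ^^ b) ((shS 2 ^^ c) S))) (Dmulti (a,b,c) M)"
proof -
  have 1: "finite ((shS 2 ^^ c) S) \<and> dep ((shS 2 ^^ c) S) ((Dtot 2 ^^ c) M)"
    by (rule dep_Dtot_pow[OF assms])
  have 2: "finite ((shS 1 ^^ b) ((shS 2 ^^ c) S)) \<and> dep ((shS 1 ^^ b) ((shS 2 ^^ c) S)) ((Dtot 1 ^^ b) ((Dtot 2 ^^ c) M))"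
    using 1 by (intro dep_Dtot_pow) auto
  have 3: "finite ((shS 0 ^^ a) ((shS 1 ^^ b) ((shS 2 ^^ c) S))) \<and> dep ((shS 0 ^^ a) ((shS 1 ^^ b) ((shS 2 ^^ c) S))) ((Dtot 0 ^^ a) ((Dtot 1 ^^ b) ((Dtot 2 ^^ c) M)))"
    using 2 by (intro dep_Dtot_pow) auto
  thus ?thesis by (simp add: Dmulti_def)
qed

lemma Dtot_affine:
  assumes "finite S" "dep S M" "K \<notin> S" "shift i J0 = K"
  shows "Dtot i M x (u(K:=s)) = Dtot i M x u + (s - u K) * pu J0 M x u"
proof -
  let ?S = "insert J0 S"
  have fS: "finite ?S" using assms(1) by simp
  have dS: "dep ?S M" using assms(2) by (rule dep_mono) auto
  have KS: "K \<notin> ?S" using assms(3,4) shift_neq[of i J0] by auto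
  have p1: "px i M x (u(K:=s)) = px i M x u" using dep_upd[OF dep_px[OF dS] KS] .
  have p2: "\<And>J. pu J M x (u(K:=s)) = pu J M x u" using dep_upd[OF dep_pu[OF dS] KS] .
  have p3: "(u(K:=s)) (shift i J) = u (shift i J) + (if J = J0 then s - u K else 0)" for J
  proof (cases "J = J0")
    case True thus ?thesis using assms(4) by simp
  next
    case False
    hence "shift i J \<noteq> K" using assms(4) shift_inj[of i J J0] by auto
    thus ?thesis using False by simp
  qed
  have e1: "Dtot i M x (u(K:=s)) = px i M x u + (\<Sum>J\<in>?S. (u (shift i J) + (if J = J0 then s - u K else 0)) * pu J M x u)"
    by (simp only: Dtot_S[OF fS dS] p1 p2 p3)
  have e2: "(\<Sum>J\<in>?S. (u (shift i J) + (if J = J0 then s - u K else 0)) * pu J M x u)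
      = (\<Sum>J\<in>?S. u (shift i J) * pu J M x u + (if J = J0 then (s - u K) * pu J M x u else 0))"
    by (rule sum.cong[OF refl]) (simp add: distrib_right)
  have e3: "(\<Sum>J\<in>?S. u (shift i J) * pu J M x u + (if J = J0 then (s - u K) * pu J M x u else 0))
     = (\<Sum>J\<in>?S. u (shift i J) * pu J M x u) + (\<Sum>J\<in>?S. (if J = J0 then (s - u K) * pu J M x u else 0))"
    by (rule sum.distrib)
  have e4: "(\<Sum>J\<in>?S. (if J = J0 then (s - u K) * pu J M x u else 0)) = (s - u K) * pu J0 M x u"
    by (subst sum.delta[OF fS]) simp
  have e5: "Dtot i M x u = px i M x u + (\<Sum>J\<in>?S. u (shift i J) * pu J M x u)"
    by (rule Dtot_S[OF fS dS])
  show ?thesis unfolding e1 e2 e3 e4 e5 by (simp only: add.assoc)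
qed

lemma pu_Dtot:
  assumes "finite S" "dep S M" "K \<notin> S" "shift i J0 = K"
  shows "pu K (Dtot i M) x u = pu J0 M x u"
proof -
  have "pu K (Dtot i M) x u = deriv (\<lambda>s. Dtot i M x (u(K:=s))) (u K)"
    by (simp add: pu_def)
  also have "\<dots> = deriv (\<lambda>s. Dtot i M x u + (s - u K) * pu J0 M x u) (u K)"
    by (simp only: Dtot_affine[OF assms])
  also have "\<dots> = pu J0 M x u"
    by (rule DERIV_imp_deriv) (auto intro!: derivative_eq_intros)
  finally show ?thesis .
qed

lemma eventually_pos_nhds: "(r::real) > 0 \<Longrightarrow> eventually (\<lambda>s. s > 0) (nhds r)"
  using eventually_nhds_in_open[of "{0<..}" r] by simp

lemma px_local: "agree M M' \<Longrightarrow> fst x > 0 \<Longrightarrow> px i M x u = px i M' x u"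
proof -
  assume a: "agree M M'" "fst x > 0"
  obtain r z t where x: "x = (r,z,t)" by (cases x) auto
  have r: "r > 0" using a x by simp
  have e0: "deriv (\<lambda>s. M (s, z, t) u) r = deriv (\<lambda>s. M' (s, z, t) u) r"
    by (rule deriv_cong_ev[OF _ refl]) (use eventually_pos_nhds[OF r] a(1) in \<open>auto simp: agree_def elim: eventually_mono\<close>)
  have e1: "(\<lambda>s. M (r, s, t) u) = (\<lambda>s. M' (r, s, t) u)" "(\<lambda>s. M (r, z, s) u) = (\<lambda>s. M' (r, z, s) u)"
    using a(1) r by (auto simp: agree_def)
  show ?thesis unfolding px_def x by (simp add: e0 e1)
qed

lemma pu_local: "agree M M' \<Longrightarrow> fst x > 0 \<Longrightarrow> pu J M x u = pu J M' x u"
proof -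
  assume a: "agree M M'" "fst x > 0"
  have "\<And>v. M x v = M' x v" using a unfolding agree_def by blast
  thus ?thesis unfolding pu_def by simp
qed

lemma agree_pu: "agree M M' \<Longrightarrow> agree (pu J M) (pu J M')"
  using pu_local unfolding agree_def by blast

lemma Dtot_local:
  assumes "finite S" "dep S M" "dep S M'" "agree M M'"
  shows "agree (Dtot i M) (Dtot i M')"
  unfolding agree_def
  by (auto simp: Dtot_S[OF assms(1,2)] Dtot_S[OF assms(1,3)] px_local[OF assms(4)] pu_local[OF assms(4)])

lemma Dtot_pow_local:
  assumes "finite S" "dep S M" "dep S M'" "agree M M'"
  shows "agree ((Dtot i ^^ n) M) ((Dtot i ^^ n) M')"
proof (induction n)
  case 0 thus ?case using assms(4) by simp
next
  case (Suc n)
  have "finite ((shS i ^^ n) S) \<and> dep ((shS i ^^ n) S) ((Dtot i ^^ n) M)" by (rule dep_Dtot_pow[OF assms(1,2)])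
  moreover have "finite ((shS i ^^ n) S) \<and> dep ((shS i ^^ n) S) ((Dtot i ^^ n) M')" by (rule dep_Dtot_pow[OF assms(1,3)])
  ultimately show ?case using Suc by (auto intro: Dtot_local)
qed

lemma Dmulti_local:
  assumes "finite S" "dep S M" "dep S M'" "agree M M'"
  shows "agree (Dmulti J M) (Dmulti J M')"
proof -
  obtain a b c where J: "J = (a,b,c)" by (cases J) auto
  let ?S2 = "(shS 2 ^^ c) S" and ?S1 = "(shS 1 ^^ b) ((shS 2 ^^ c) S)"
  have 1: "agree ((Dtot 2 ^^ c) M) ((Dtot 2 ^^ c) M')" by (rule Dtot_pow_local[OF assms])
  have d2: "finite ?S2 \<and> dep ?S2 ((Dtot 2 ^^ c) M)" "finite ?S2 \<and> dep ?S2 ((Dtot 2 ^^ c) M')"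
    by (rule dep_Dtot_pow[OF assms(1,2)], rule dep_Dtot_pow[OF assms(1,3)])
  have 2: "agree ((Dtot 1 ^^ b) ((Dtot 2 ^^ c) M)) ((Dtot 1 ^^ b) ((Dtot 2 ^^ c) M'))"
    using Dtot_pow_local[of ?S2 "(Dtot 2 ^^ c) M" "(Dtot 2 ^^ c) M'"] d2 1 by blast
  have d1: "finite ?S1 \<and> dep ?S1 ((Dtot 1 ^^ b) ((Dtot 2 ^^ c) M))" "finite ?S1 \<and> dep ?S1 ((Dtot 1 ^^ b) ((Dtot 2 ^^ c) M'))"
    using d2 by (auto intro!: dep_Dtot_pow)
  have 3: "agree ((Dtot 0 ^^ a) ((Dtot 1 ^^ b) ((Dtot 2 ^^ c) M))) ((Dtot 0 ^^ a) ((Dtot 1 ^^ b) ((Dtot 2 ^^ c) M')))"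
    using Dtot_pow_local[of ?S1 "(Dtot 1 ^^ b) ((Dtot 2 ^^ c) M)" "(Dtot 1 ^^ b) ((Dtot 2 ^^ c) M')"] d1 2 by blast
  thus ?thesis by (simp add: J Dmulti_def)
qed

lemma euler_local:
  assumes "finite S" "dep S L" "dep S L'" "agree L L'"
  shows "agree (euler L) (euler L')"
  unfolding agree_def
proof (intro allI impI)
  fix x :: pt and u :: jet assume x: "fst x > 0"
  have "\<And>J. agree (Dmulti J (pu J L)) (Dmulti J (pu J L'))"
    using assms by (intro Dmulti_local[OF assms(1)] dep_pu agree_pu)
  hence "\<And>J. Dmulti J (pu J L) x u = Dmulti J (pu J L') x u" using x unfolding agree_def by blast
  thus "euler L x u = euler L' x u"
    by (simp add: euler_S[OF assms(1,2)] euler_S[OF assms(1,3)])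
qed


lemma deriv_shift0: fixes f :: "real \<Rightarrow> real" shows "deriv (\<lambda>s. f (a + s)) 0 = deriv f a"
proof -
  have "\<And>D. (f has_field_derivative D) (at a) = ((\<lambda>s. f (a + s)) has_field_derivative D) (at 0)"
    using DERIV_shift[of f _ 0 a] by (simp add: add.commute)
  thus ?thesis unfolding deriv_def by simp
qed

lemma diff_shift0: fixes f :: "real \<Rightarrow> real" shows "(\<lambda>s. f (a + s)) differentiable (at 0) \<longleftrightarrow> f differentiable (at a)"
proof -
  have "\<And>D. (f has_field_derivative D) (at a) = ((\<lambda>s. f (a + s)) has_field_derivative D) (at 0)"
    using DERIV_shift[of f _ 0 a] by (simp add: add.commute)
  thus ?thesis unfolding real_differentiable_def by simp
qed

lemma has_deriv_of_diff: "f differentiable (at x) \<Longrightarrow> (f has_real_derivative deriv f x) (at x)"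
  using DERIV_deriv_iff_real_differentiable by blast

definition er :: pt where "er = (1,0,0)"
definition ez :: pt where "ez = (0,1,0)"
definition et :: pt where "et = (0,0,1)"

lemma basis_pt: "er \<in> Basis" "ez \<in> Basis" "et \<in> Basis"
  by (auto simp: er_def ez_def et_def Basis_prod_def zero_prod_def)

lemma pdir_er: "pdir er g = d_r g"
proof (intro ext)
  fix x :: pt obtain r z t where x: "x = (r,z,t)" by (cases x) auto
  have "pdir er g x = deriv (\<lambda>s. g (r + s, z, t)) 0"
    by (simp add: pdir_def x er_def)
  also have "\<dots> = deriv (\<lambda>s. g (s,z,t)) r" by (rule deriv_shift0[of "\<lambda>s. g (s,z,t)"])
  also have "\<dots> = d_r g x" by (simp add: d_r_def x)
  finally show "pdir er g x = d_r g x" .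
qed

lemma pdir_ez: "pdir ez g = d_z g"
proof (intro ext)
  fix x :: pt obtain r z t where x: "x = (r,z,t)" by (cases x) auto
  have "pdir ez g x = deriv (\<lambda>s. g (r, z + s, t)) 0"
    by (simp add: pdir_def x ez_def)
  also have "\<dots> = deriv (\<lambda>s. g (r,s,t)) z" by (rule deriv_shift0[of "\<lambda>s. g (r,s,t)"])
  also have "\<dots> = d_z g x" by (simp add: d_z_def x)
  finally show "pdir ez g x = d_z g x" .
qed

lemma pdir_et: "pdir et g = d_t g"
proof (intro ext)
  fix x :: pt obtain r z t where x: "x = (r,z,t)" by (cases x) auto
  have "pdir et g x = deriv (\<lambda>s. g (r, z, t + s)) 0"
    by (simp add: pdir_def x et_def)
  also have "\<dots> = deriv (\<lambda>s. g (r,z,s)) t" by (rule deriv_shift0[of "\<lambda>s. g (r,z,s)"])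
  also have "\<dots> = d_t g x" by (simp add: d_t_def x)
  finally show "pdir et g x = d_t g x" .
qed

lemma Cinf_diff: "Cinf_on U f \<Longrightarrow> set ks \<subseteq> Basis \<Longrightarrow> i \<in> Basis \<Longrightarrow> x \<in> U \<Longrightarrow>
   (\<lambda>s. iterpd ks f (x + s *\<^sub>R i)) differentiable (at 0)"
  unfolding Cinf_on_def by blast

lemma Cinf_cont: "Cinf_on U f \<Longrightarrow> set ks \<subseteq> Basis \<Longrightarrow> continuous_on U (iterpd ks f)"
  unfolding Cinf_on_def by blast

abbreviation "Upos \<equiv> {x::pt. fst x > 0}"

lemma Cinf_diff_r: assumes "Cinf_on Upos g" "set ks \<subseteq> Basis" "r > 0"
  shows "(\<lambda>s. iterpd ks g (s,z,t)) differentiable (at r)"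
proof -
  have "(\<lambda>s. iterpd ks g ((r,z,t) + s *\<^sub>R er)) differentiable (at 0)"
    using Cinf_diff[OF assms(1,2) basis_pt(1)] assms(3) by simp
  hence "(\<lambda>s. iterpd ks g (r + s, z, t)) differentiable (at 0)" by (simp add: er_def)
  thus ?thesis using diff_shift0[of "\<lambda>s. iterpd ks g (s,z,t)"] by simp
qed

lemma Cinf_diff_z: assumes "Cinf_on Upos g" "set ks \<subseteq> Basis" "r > 0"
  shows "(\<lambda>s. iterpd ks g (r,s,t)) differentiable (at z)"
proof -
  have "(\<lambda>s. iterpd ks g ((r,z,t) + s *\<^sub>R ez)) differentiable (at 0)"
    using Cinf_diff[OF assms(1,2) basis_pt(2)] assms(3) by simp
  hence "(\<lambda>s. iterpd ks g (r, z + s, t)) differentiable (at 0)" by (simp add: ez_def)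
  thus ?thesis using diff_shift0[of "\<lambda>s. iterpd ks g (r,s,t)"] by simp
qed

lemma Cinf_diff_t: assumes "Cinf_on Upos g" "set ks \<subseteq> Basis" "r > 0"
  shows "(\<lambda>s. iterpd ks g (r,z,s)) differentiable (at t)"
proof -
  have "(\<lambda>s. iterpd ks g ((r,z,t) + s *\<^sub>R et)) differentiable (at 0)"
    using Cinf_diff[OF assms(1,2) basis_pt(3)] assms(3) by simp
  hence "(\<lambda>s. iterpd ks g (r, z, t + s)) differentiable (at 0)" by (simp add: et_def)
  thus ?thesis using diff_shift0[of "\<lambda>s. iterpd ks g (r,z,s)"] by simp
qed

lemma iterpd_pullback:
  fixes f :: "'a::euclidean_space \<Rightarrow> real" and T :: "'b::euclidean_space \<Rightarrow> 'a"
  assumes lin: "\<And>y s i. T (y + s *\<^sub>R i) = T y + s *\<^sub>R T i"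
  shows "iterpd ks (\<lambda>y. f (c + T y)) = (\<lambda>y. iterpd (map T ks) f (c + T y))"
proof (induction ks)
  case Nil thus ?case by simp
next
  case (Cons i ks)
  show ?case
  proof (intro ext)
    fix y
    have "iterpd (i # ks) (\<lambda>y. f (c + T y)) y = deriv (\<lambda>s. iterpd (map T ks) f (c + T (y + s *\<^sub>R i))) 0"
      by (simp add: Cons pdir_def)
    also have "\<dots> = deriv (\<lambda>s. iterpd (map T ks) f ((c + T y) + s *\<^sub>R T i)) 0"
      by (simp add: lin add.assoc)
    also have "\<dots> = iterpd (map T (i # ks)) f (c + T y)" by (simp add: pdir_def)
    finally show "iterpd (i # ks) (\<lambda>y. f (c + T y)) y = iterpd (map T (i # ks)) f (c + T y)" .
  qed
qed

lemma Cinf_pullback: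
  fixes f :: "'a::euclidean_space \<Rightarrow> real" and T :: "'b::euclidean_space \<Rightarrow> 'a"
  assumes lin: "\<And>y s i. T (y + s *\<^sub>R i) = T y + s *\<^sub>R T i"
    and cT: "continuous_on UNIV T" and bas: "\<And>i. i \<in> Basis \<Longrightarrow> T i \<in> Basis"
    and cf: "Cinf_on U f" and V: "V = {y. c + T y \<in> U}"
  shows "Cinf_on V (\<lambda>y. f (c + T y))"
  unfolding Cinf_on_def
proof (intro allI impI conjI ballI)
  fix ks :: "'b list" assume ks: "set ks \<subseteq> Basis"
  have ks': "set (map T ks) \<subseteq> Basis" using ks bas by auto
  have cont: "continuous_on U (iterpd (map T ks) f)" by (rule Cinf_cont[OF cf ks'])
  have ca: "continuous_on V (\<lambda>y. c + T y)"
    by (intro continuous_intros continuous_on_subset[OF cT]) auto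
  have "continuous_on V (\<lambda>y. iterpd (map T ks) f (c + T y))"
    by (rule continuous_on_compose2[OF cont ca]) (auto simp: V)
  thus "continuous_on V (iterpd ks (\<lambda>y. f (c + T y)))" by (simp add: iterpd_pullback[OF lin])
  fix i :: 'b and y assume i: "i \<in> Basis" and y: "y \<in> V"
  have "(\<lambda>s. iterpd (map T ks) f ((c + T y) + s *\<^sub>R T i)) differentiable (at 0)"
    by (rule Cinf_diff[OF cf ks' bas[OF i]]) (use y V in simp)
  thus "(\<lambda>s. iterpd ks (\<lambda>y. f (c + T y)) (y + s *\<^sub>R i)) differentiable (at 0)"
    by (simp add: iterpd_pullback[OF lin] lin add.assoc)
qed

lemma iterpd_append: "iterpd (ks @ js) f = iterpd ks (iterpd js f)"
  by (induction ks) auto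

lemma Cinf_iterpd: "Cinf_on U f \<Longrightarrow> set js \<subseteq> Basis \<Longrightarrow> Cinf_on U (iterpd js f)"
  unfolding Cinf_on_def by (metis iterpd_append set_append Un_subset_iff)

lemma pdir_one: "pdir (1::real) f = deriv f"
proof (intro ext)
  fix x show "pdir 1 f x = deriv f x" unfolding pdir_def by (simp add: deriv_shift0)
qed

lemma F_facts:
  assumes "Cinf_on (UNIV::real set) F"
  shows "F differentiable (at x)" "deriv F differentiable (at x)"
    "deriv (deriv F) differentiable (at x)" "deriv (deriv (deriv F)) differentiable (at x)"
proof -
  have "\<And>ks. set ks \<subseteq> {1::real} \<Longrightarrow> (\<lambda>s. iterpd ks F (x + s)) differentiable (at 0)"
    using Cinf_diff[OF assms, of _ 1 x] by simp
  hence d: "\<And>ks. set ks \<subseteq> {1::real} \<Longrightarrow> iterpd ks F differentiable (at x)"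
    using diff_shift0 by blast
  show "F differentiable (at x)" using d[of "[]"] by simp
  show "deriv F differentiable (at x)" using d[of "[1]"] by (simp add: pdir_one)
  show "deriv (deriv F) differentiable (at x)" using d[of "[1,1]"] by (simp add: pdir_one)
  show "deriv (deriv (deriv F)) differentiable (at x)" using d[of "[1,1,1]"] by (simp add: pdir_one)
qed


declare One_nat_def[simp del]

definition Eexp :: "real \<Rightarrow> real \<Rightarrow> real \<Rightarrow> real \<Rightarrow> (real \<Rightarrow> real) \<Rightarrow> dfun" where
  "Eexp c0 dl bt m F = (\<lambda>x u. c0 ^ 4 * (u (2,0,0) + 2 * m * u (1,0,0) / fst x) + dl * u (0,0,3)
     + bt * (deriv (deriv F) (u (0,0,0)) * (u (0,0,1))\<^sup>2 + deriv F (u (0,0,0)) * u (0,0,2))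
     - 2 * c0 ^ 3 * u (0,1,1))"

lemma px_simps:
  "px 0 M (r,z,t) u = deriv (\<lambda>s. M (s,z,t) u) r"
  "px 1 M (r,z,t) u = deriv (\<lambda>s. M (r,s,t) u) z"
  "px 2 M (r,z,t) u = deriv (\<lambda>s. M (r,z,s) u) t"
  by (simp_all add: px_def)

lemma shift_conc:
  "shift 0 (0,0,0) = (1,0,0)"
  "shift 1 (0,0,0) = (0,1,0)"
  "shift 2 (0,0,0) = (0,0,1)"
  "shift 0 (0,0,1) = (1,0,1)"
  "shift 1 (0,0,1) = (0,1,1)"
  "shift 2 (0,0,1) = (0,0,2)"
  "shift 0 (0,0,2) = (1,0,2)"
  "shift 1 (0,0,2) = (0,1,2)"
  "shift 2 (0,0,2) = (0,0,3)"
  "shift 0 (0,0,3) = (1,0,3)"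
  "shift 1 (0,0,3) = (0,1,3)"
  "shift 2 (0,0,3) = (0,0,4)"
  "shift 0 (0,0,4) = (1,0,4)"
  "shift 1 (0,0,4) = (0,1,4)"
  "shift 2 (0,0,4) = (0,0,5)"
  "shift 0 (0,1,0) = (1,1,0)"
  "shift 1 (0,1,0) = (0,2,0)"
  "shift 2 (0,1,0) = (0,1,1)"
  "shift 0 (0,1,1) = (1,1,1)"
  "shift 1 (0,1,1) = (0,2,1)"
  "shift 2 (0,1,1) = (0,1,2)"
  "shift 0 (0,1,2) = (1,1,2)"
  "shift 1 (0,1,2) = (0,2,2)"
  "shift 2 (0,1,2) = (0,1,3)"
  "shift 0 (0,1,3) = (1,1,3)"
  "shift 1 (0,1,3) = (0,2,3)"
  "shift 2 (0,1,3) = (0,1,4)"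
  "shift 0 (0,2,0) = (1,2,0)"
  "shift 1 (0,2,0) = (0,3,0)"
  "shift 2 (0,2,0) = (0,2,1)"
  "shift 0 (0,2,1) = (1,2,1)"
  "shift 1 (0,2,1) = (0,3,1)"
  "shift 2 (0,2,1) = (0,2,2)"
  "shift 0 (0,2,2) = (1,2,2)"
  "shift 1 (0,2,2) = (0,3,2)"
  "shift 2 (0,2,2) = (0,2,3)"
  "shift 0 (0,3,0) = (1,3,0)"
  "shift 1 (0,3,0) = (0,4,0)"
  "shift 2 (0,3,0) = (0,3,1)"
  "shift 0 (0,3,1) = (1,3,1)"
  "shift 1 (0,3,1) = (0,4,1)"
  "shift 2 (0,3,1) = (0,3,2)"
  "shift 0 (0,4,0) = (1,4,0)"
  "shift 1 (0,4,0) = (0,5,0)"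
  "shift 2 (0,4,0) = (0,4,1)"
  "shift 0 (1,0,0) = (2,0,0)"
  "shift 1 (1,0,0) = (1,1,0)"
  "shift 2 (1,0,0) = (1,0,1)"
  "shift 0 (1,0,1) = (2,0,1)"
  "shift 1 (1,0,1) = (1,1,1)"
  "shift 2 (1,0,1) = (1,0,2)"
  "shift 0 (1,0,2) = (2,0,2)"
  "shift 1 (1,0,2) = (1,1,2)"
  "shift 2 (1,0,2) = (1,0,3)"
  "shift 0 (1,0,3) = (2,0,3)"
  "shift 1 (1,0,3) = (1,1,3)"
  "shift 2 (1,0,3) = (1,0,4)"
  "shift 0 (1,1,0) = (2,1,0)"
  "shift 1 (1,1,0) = (1,2,0)"
  "shift 2 (1,1,0) = (1,1,1)"
  "shift 0 (1,1,1) = (2,1,1)"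
  "shift 1 (1,1,1) = (1,2,1)"
  "shift 2 (1,1,1) = (1,1,2)"
  "shift 0 (1,1,2) = (2,1,2)"
  "shift 1 (1,1,2) = (1,2,2)"
  "shift 2 (1,1,2) = (1,1,3)"
  "shift 0 (1,2,0) = (2,2,0)"
  "shift 1 (1,2,0) = (1,3,0)"
  "shift 2 (1,2,0) = (1,2,1)"
  "shift 0 (1,2,1) = (2,2,1)"
  "shift 1 (1,2,1) = (1,3,1)"
  "shift 2 (1,2,1) = (1,2,2)"
  "shift 0 (1,3,0) = (2,3,0)"
  "shift 1 (1,3,0) = (1,4,0)"
  "shift 2 (1,3,0) = (1,3,1)"
  "shift 0 (2,0,0) = (3,0,0)"
  "shift 1 (2,0,0) = (2,1,0)"
  "shift 2 (2,0,0) = (2,0,1)"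
  "shift 0 (2,0,1) = (3,0,1)"
  "shift 1 (2,0,1) = (2,1,1)"
  "shift 2 (2,0,1) = (2,0,2)"
  "shift 0 (2,0,2) = (3,0,2)"
  "shift 1 (2,0,2) = (2,1,2)"
  "shift 2 (2,0,2) = (2,0,3)"
  "shift 0 (2,1,0) = (3,1,0)"
  "shift 1 (2,1,0) = (2,2,0)"
  "shift 2 (2,1,0) = (2,1,1)"
  "shift 0 (2,1,1) = (3,1,1)"
  "shift 1 (2,1,1) = (2,2,1)"
  "shift 2 (2,1,1) = (2,1,2)"
  "shift 0 (2,2,0) = (3,2,0)"
  "shift 1 (2,2,0) = (2,3,0)"
  "shift 2 (2,2,0) = (2,2,1)"
  "shift 0 (3,0,0) = (4,0,0)"
  "shift 1 (3,0,0) = (3,1,0)"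
  "shift 2 (3,0,0) = (3,0,1)"
  "shift 0 (3,0,1) = (4,0,1)"
  "shift 1 (3,0,1) = (3,1,1)"
  "shift 2 (3,0,1) = (3,0,2)"
  "shift 0 (3,1,0) = (4,1,0)"
  "shift 1 (3,1,0) = (3,2,0)"
  "shift 2 (3,1,0) = (3,1,1)"
  "shift 0 (4,0,0) = (5,0,0)"
  "shift 1 (4,0,0) = (4,1,0)"
  "shift 2 (4,0,0) = (4,0,1)"
  by (simp_all add: shift_def)

lemma kzkE_eq:
  assumes dF: "\<And>x. F differentiable (at x)" and dF1: "\<And>x. deriv F differentiable (at x)"
  shows "kzkE c0 dl bt m F = Eexp c0 dl bt m F"
proof -
  define G0 where "G0 = (\<lambda>(y::pt) (v::jet). F (v (0,0,0)))"
  define G1 where "G1 = (\<lambda>(x::pt) (u::jet). u (0,0,1) * deriv F (u (0,0,0)))"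
  define G2 where "G2 = (\<lambda>(x::pt) (u::jet). deriv (deriv F) (u (0,0,0)) * (u (0,0,1))\<^sup>2 + deriv F (u (0,0,0)) * u (0,0,2))"
  have d0: "dep {(0,0,0)} G0" by (simp add: dep_def G0_def)
  have "Dtot 2 G0 = G1"
  proof (intro ext)
    fix x :: pt and u :: jet
    obtain r z t where x: "x = (r,z,t)" by (cases x) auto
    have "Dtot 2 G0 x u = px 2 G0 x u + (\<Sum>J\<in>{(0,0,0)}. u (shift 2 J) * pu J G0 x u)"
      by (rule Dtot_S[OF _ d0]) simp
    moreover have "px 2 G0 x u = 0" by (simp add: x px_simps G0_def)
    moreover have "pu (0,0,0) G0 x u = deriv F (u (0,0,0))" by (simp add: pu_def G0_def)
    ultimately show "Dtot 2 G0 x u = G1 x u"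
      by (simp add: shift_conc G1_def)
  qed
  moreover
  have d1: "dep {(0,0,0),(0,0,1)} G1" by (simp add: dep_def G1_def)
  have "Dtot 2 G1 = G2"
  proof (intro ext)
    fix x :: pt and u :: jet
    obtain r z t where x: "x = (r,z,t)" by (cases x) auto
    have p0: "pu (0,0,0) G1 x u = u (0,0,1) * deriv (deriv F) (u (0,0,0))"
      unfolding pu_def G1_def
      apply (simp add: fun_upd_apply)
      apply (rule DERIV_imp_deriv)
      apply (rule derivative_eq_intros has_deriv_of_diff[OF dF1] | simp)+
      done
    have p1: "pu (0,0,1) G1 x u = deriv F (u (0,0,0))"
      unfolding pu_def G1_def by (simp add: fun_upd_apply)
    have "Dtot 2 G1 x u = px 2 G1 x u + (\<Sum>J\<in>{(0,0,0),(0,0,1)}. u (shift 2 J) * pu J G1 x u)"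
      by (rule Dtot_S[OF _ d1]) simp
    moreover have "px 2 G1 x u = 0" by (simp add: x px_simps G1_def)
    ultimately show "Dtot 2 G1 x u = G2 x u"
      by (simp add: shift_conc p0 p1 G2_def power2_eq_square)
  qed
  ultimately show ?thesis unfolding kzkE_def Eexp_def G0_def[symmetric] G2_def by simp
qed

lemma Dmulti_conc:
  "Dmulti (0,0,0) M = M" "Dmulti (1,0,0) M = Dtot 0 M" "Dmulti (0,1,0) M = Dtot 1 M"
  "Dmulti (0,0,1) M = Dtot 2 M" "Dmulti (2,0,0) M = Dtot 0 (Dtot 0 M)" "Dmulti (0,0,2) M = Dtot 2 (Dtot 2 M)"
  "Dmulti (0,0,3) M = Dtot 2 (Dtot 2 (Dtot 2 M))" "Dmulti (0,1,1) M = Dtot 1 (Dtot 2 M)"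
  by (simp_all add: Dmulti_def numeral_3_eq_3 numeral_2_eq_2 One_nat_def)

lemma Dtot_eqI:
  assumes "finite S" "dep S M" "\<And>r z t u. r > 0 \<Longrightarrow> px i M (r,z,t) u + (\<Sum>J\<in>S. u (shift i J) * pu J M (r,z,t) u) = Q (r,z,t) u"
  shows "agree (Dtot i M) Q"
  unfolding agree_def
proof (intro allI impI)
  fix x :: pt and u assume "fst x > 0"
  then obtain r z t where x: "x = (r,z,t)" "r > 0" by (cases x) auto
  show "Dtot i M x u = Q x u" using assms(3)[OF x(2)] by (simp add: Dtot_S[OF assms(1,2)] x(1))
qed

lemma agree_trans: "agree A B \<Longrightarrow> agree B C \<Longrightarrow> agree A C"
  unfolding agree_def by simp

lemma agreeD: "agree A B \<Longrightarrow> r > 0 \<Longrightarrow> A (r,z,t) u = B (r,z,t) u"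
  unfolding agree_def by auto

lemma dep_empty_shS: "shS i {} = {}" by (simp add: shS_def)

lemma dep_const: "dep {} (\<lambda>x u. f x)" by (simp add: dep_def)

lemma Dtot_chain:
  assumes "finite S" "dep S M" "dep (shS j S) Q" "agree (Dtot j M) Q"
  shows "agree (Dtot i (Dtot j M)) (Dtot i Q)"
  by (rule Dtot_local[OF finite_shS[OF assms(1)] dep_Dtot[OF assms(1,2)] assms(3,4)])

lemma euler_lamE:
  fixes lam :: "pt \<Rightarrow> real"
  assumes dF: "\<And>x. F differentiable (at x)" and dF1: "\<And>x. deriv F differentiable (at x)"
    and dF2: "\<And>x. deriv (deriv F) differentiable (at x)"
    and hr: "\<And>r z t. r > 0 \<Longrightarrow> (\<lambda>s. lam (s,z,t)) differentiable (at r)"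
    and hrr: "\<And>r z t. r > 0 \<Longrightarrow> (\<lambda>s. d_r lam (s,z,t)) differentiable (at r)"
    and ht: "\<And>r z t. r > 0 \<Longrightarrow> (\<lambda>s. lam (r,z,s)) differentiable (at t)"
    and htt: "\<And>r z t. r > 0 \<Longrightarrow> (\<lambda>s. d_t lam (r,z,s)) differentiable (at t)"
    and httt: "\<And>r z t. r > 0 \<Longrightarrow> (\<lambda>s. d_t (d_t lam) (r,z,s)) differentiable (at t)"
    and hzt: "\<And>r z t. r > 0 \<Longrightarrow> (\<lambda>s. d_t lam (r,s,t)) differentiable (at z)"
    and r: "r > 0"
  shows "euler (\<lambda>x u. lam x * Eexp c0 dl bt m F x u) (r,z,t) u =
     c0 ^ 4 * (d_r (d_r lam) (r,z,t) - 2 * m * d_r lam (r,z,t) / r + 2 * m * lam (r,z,t) / r ^ 2)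
     - dl * d_t (d_t (d_t lam)) (r,z,t) + bt * deriv F (u (0,0,0)) * d_t (d_t lam) (r,z,t)
     - 2 * c0 ^ 3 * d_z (d_t lam) (r,z,t)"
proof -
  define F1 where "F1 = deriv F"
  define F2 where "F2 = deriv F1"
  define F3 where "F3 = deriv F2"
  have DF1: "\<And>x. (F1 has_real_derivative F2 x) (at x)" unfolding F2_def F1_def using has_deriv_of_diff[OF dF1] .
  have DF2: "\<And>x. (F2 has_real_derivative F3 x) (at x)" unfolding F3_def F2_def F1_def using has_deriv_of_diff[OF dF2] .
  have Dr: "\<And>r z t. r > 0 \<Longrightarrow> ((\<lambda>s. lam (s,z,t)) has_real_derivative d_r lam (r,z,t)) (at r)"
    using has_deriv_of_diff[OF hr] by (simp add: d_r_def)
  have Drr: "\<And>r z t. r > 0 \<Longrightarrow> ((\<lambda>s. d_r lam (s,z,t)) has_real_derivative d_r (d_r lam) (r,z,t)) (at r)"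
    using has_deriv_of_diff[OF hrr] by (simp add: d_r_def[of "d_r lam"])
  have Dt: "\<And>r z t. r > 0 \<Longrightarrow> ((\<lambda>s. lam (r,z,s)) has_real_derivative d_t lam (r,z,t)) (at t)"
    using has_deriv_of_diff[OF ht] by (simp add: d_t_def)
  have Dtt: "\<And>r z t. r > 0 \<Longrightarrow> ((\<lambda>s. d_t lam (r,z,s)) has_real_derivative d_t (d_t lam) (r,z,t)) (at t)"
    using has_deriv_of_diff[OF htt] by (simp add: d_t_def[of "d_t lam"])
  have Dttt: "\<And>r z t. r > 0 \<Longrightarrow> ((\<lambda>s. d_t (d_t lam) (r,z,s)) has_real_derivative d_t (d_t (d_t lam)) (r,z,t)) (at t)"
    using has_deriv_of_diff[OF httt] by (simp add: d_t_def[of "d_t (d_t lam)"])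
  have Dzt: "\<And>r z t. r > 0 \<Longrightarrow> ((\<lambda>s. d_t lam (r,s,t)) has_real_derivative d_z (d_t lam) (r,z,t)) (at z)"
    using has_deriv_of_diff[OF hzt] by (simp add: d_z_def)
  define L where "L = (\<lambda>x u. lam x * Eexp c0 dl bt m F x u)"
  define S :: "(nat \<times> nat \<times> nat) set" where "S = {(0,0,0),(1,0,0),(0,0,1),(2,0,0),(0,0,2),(0,0,3),(0,1,1)}"
  have fS: "finite S" by (simp add: S_def)
  have dL: "dep S L" by (simp add: dep_def S_def L_def Eexp_def)
  have EF: "Eexp c0 dl bt m F = (\<lambda>x u. c0 ^ 4 * (u (2,0,0) + u (1,0,0) * (2 * m / fst x)) + dl * u (0,0,3)
     + bt * (F2 (u (0,0,0)) * (u (0,0,1))\<^sup>2 + F1 (u (0,0,0)) * u (0,0,2))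
     - 2 * c0 ^ 3 * u (0,1,1))" by (intro ext) (simp add: Eexp_def F1_def F2_def ac_simps)
  have P000: "pu (0,0,0) L x u = lam x * (bt * (F3 (u (0,0,0)) * (u (0,0,1))\<^sup>2 + F2 (u (0,0,0)) * u (0,0,2)))" for x u
    unfolding pu_def L_def EF
    apply (simp add: fun_upd_apply)
    apply (rule DERIV_imp_deriv)
    apply (rule derivative_eq_intros DF1 DF2 | simp)+
    done
  have P100: "pu (1,0,0) L x u = lam x * (c0 ^ 4 * (2 * m / fst x))" for x u
    unfolding pu_def L_def EF
    apply (simp add: fun_upd_apply del: times_divide_eq_right)
    apply (rule DERIV_imp_deriv)
    apply (rule derivative_eq_intros | simp del: times_divide_eq_right)+
    apply (simp add: ac_simps)
    done
  have P001: "pu (0,0,1) L x u = lam x * (bt * (F2 (u (0,0,0)) * (2 * u (0,0,1))))" for x u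
    unfolding pu_def L_def EF
    apply (simp add: fun_upd_apply)
    apply (rule DERIV_imp_deriv)
    apply (rule derivative_eq_intros | simp)+
    done
  have P200: "pu (2,0,0) L x u = lam x * c0 ^ 4" for x u
    unfolding pu_def L_def EF
    apply (simp add: fun_upd_apply)
    apply (rule DERIV_imp_deriv)
    apply (rule derivative_eq_intros | simp)+
    done
  have P002: "pu (0,0,2) L x u = lam x * (bt * F1 (u (0,0,0)))" for x u
    unfolding pu_def L_def EF
    apply (simp add: fun_upd_apply)
    apply (rule DERIV_imp_deriv)
    apply (rule derivative_eq_intros | simp)+
    done
  have P003: "pu (0,0,3) L x u = lam x * dl" for x u
    unfolding pu_def L_def EF
    apply (simp add: fun_upd_apply)
    apply (rule DERIV_imp_deriv)
    apply (rule derivative_eq_intros | simp)+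
    done
  have P011: "pu (0,1,1) L x u = lam x * (- 2 * c0 ^ 3)" for x u
    unfolding pu_def L_def EF
    apply (simp add: fun_upd_apply)
    apply (rule DERIV_imp_deriv)
    apply (rule derivative_eq_intros | simp)+
    done
  define M000 where "M000 = (\<lambda>x (u::jet). lam x * (bt * (F3 (u (0,0,0)) * (u (0,0,1))\<^sup>2 + F2 (u (0,0,0)) * u (0,0,2))))"
  define M100 where "M100 = (\<lambda>x (u::jet). lam x * (c0 ^ 4 * (2 * m / fst x)))"
  define M001 where "M001 = (\<lambda>x (u::jet). lam x * (bt * (F2 (u (0,0,0)) * (2 * u (0,0,1)))))"
  define M200 where "M200 = (\<lambda>x (u::jet). lam x * c0 ^ 4)"
  define M002 where "M002 = (\<lambda>x (u::jet). lam x * (bt * F1 (u (0,0,0))))"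
  define M003 where "M003 = (\<lambda>x (u::jet). lam x * dl)"
  define M011 where "M011 = (\<lambda>x (u::jet). lam x * (- 2 * c0 ^ 3))"
  have PF: "pu (0,0,0) L = M000" "pu (1,0,0) L = M100" "pu (0,0,1) L = M001" "pu (2,0,0) L = M200"
    "pu (0,0,2) L = M002" "pu (0,0,3) L = M003" "pu (0,1,1) L = M011"
    by (intro ext; simp add: P000 P100 P001 P200 P002 P003 P011 M000_def M100_def M001_def M200_def M002_def M003_def M011_def)+
  have E: "euler L (r,z,t) u = M000 (r,z,t) u - Dtot 0 M100 (r,z,t) u - Dtot 2 M001 (r,z,t) u
     + Dtot 0 (Dtot 0 M200) (r,z,t) u + Dtot 2 (Dtot 2 M002) (r,z,t) u - Dtot 2 (Dtot 2 (Dtot 2 M003)) (r,z,t) u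
     + Dtot 1 (Dtot 2 M011) (r,z,t) u"
    by (simp add: euler_S[OF fS dL] S_def jord_def PF Dmulti_conc)
  have dM100: "dep {} M100" "dep {} M200" "dep {} M003" "dep {} M011" by (simp_all add: dep_def M100_def M200_def M003_def M011_def)
  have dM001: "dep {(0,0,0),(0,0,1)} M001" by (simp add: dep_def M001_def)
  have dM002: "dep {(0,0,0)} M002" by (simp add: dep_def M002_def)
  have T100: "Dtot 0 M100 (r,z,t) u = c0 ^ 4 * (2 * m) * (d_r lam (r,z,t) / r - lam (r,z,t) / r ^ 2)"
  proof -
    have "Dtot 0 M100 (r,z,t) u = px 0 M100 (r,z,t) u" by (simp add: Dtot_S[OF _ dM100(1)])
    also have "\<dots> = c0 ^ 4 * (2 * m) * (d_r lam (r,z,t) / r - lam (r,z,t) / r ^ 2)"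
      unfolding px_simps M100_def
      apply simp
      apply (rule DERIV_imp_deriv)
      apply (rule derivative_eq_intros Dr[OF r] refl | simp)+
      using r apply simp
      using r apply (simp add: field_simps power2_eq_square)
      done
    finally show ?thesis .
  qed
  have T001: "Dtot 2 M001 (r,z,t) u = d_t lam (r,z,t) * (bt * (F2 (u (0,0,0)) * (2 * u (0,0,1))))
      + u (0,0,1) * (lam (r,z,t) * (bt * (F3 (u (0,0,0)) * (2 * u (0,0,1)))))
      + u (0,0,2) * (lam (r,z,t) * (bt * (F2 (u (0,0,0)) * 2)))"
  proof -
    have a: "px 2 M001 (r,z,t) u = d_t lam (r,z,t) * (bt * (F2 (u (0,0,0)) * (2 * u (0,0,1))))"
      unfolding px_simps M001_def
      apply (rule DERIV_imp_deriv)
      apply (rule derivative_eq_intros Dt[OF r] | simp)+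
      done
    have b: "pu (0,0,0) M001 (r,z,t) u = lam (r,z,t) * (bt * (F3 (u (0,0,0)) * (2 * u (0,0,1))))"
      unfolding pu_def M001_def
      apply (simp add: fun_upd_apply)
      apply (rule DERIV_imp_deriv)
      apply (rule derivative_eq_intros DF2 | simp)+
      done
    have c: "pu (0,0,1) M001 (r,z,t) u = lam (r,z,t) * (bt * (F2 (u (0,0,0)) * 2))"
      unfolding pu_def M001_def
      apply (simp add: fun_upd_apply)
      apply (rule DERIV_imp_deriv)
      apply (rule derivative_eq_intros | simp)+
      done
    show ?thesis by (simp add: Dtot_S[OF _ dM001] a b c shift_conc)
  qed
  define Q200 where "Q200 = (\<lambda>x (u::jet). d_r lam x * c0 ^ 4)"
  have T200: "Dtot 0 (Dtot 0 M200) (r,z,t) u = d_r (d_r lam) (r,z,t) * c0 ^ 4"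
  proof -
    have ag: "agree (Dtot 0 M200) Q200"
    proof (rule Dtot_eqI[OF _ dM100(2)])
      fix r z t u assume r: "(r::real) > 0"
      show "px 0 M200 (r,z,t) u + (\<Sum>J\<in>{}. u (shift 0 J) * pu J M200 (r,z,t) u) = Q200 (r,z,t) u"
        unfolding px_simps M200_def Q200_def
        apply simp
        apply (rule DERIV_imp_deriv)
        apply (rule derivative_eq_intros Dr[OF r] | simp)+
        done
    qed simp
    have ag2: "agree (Dtot 0 (Dtot 0 M200)) (Dtot 0 Q200)"
      by (rule Dtot_chain[OF _ dM100(2) _ ag]) (simp_all add: dep_empty_shS dep_def Q200_def)
    have "Dtot 0 Q200 (r,z,t) u = d_r (d_r lam) (r,z,t) * c0 ^ 4"
    proof -
      have "dep {} Q200" by (simp add: dep_def Q200_def)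
      hence "Dtot 0 Q200 (r,z,t) u = px 0 Q200 (r,z,t) u" by (simp add: Dtot_S[OF finite.emptyI])
      also have "\<dots> = d_r (d_r lam) (r,z,t) * c0 ^ 4"
        unfolding px_simps Q200_def
        apply (rule DERIV_imp_deriv)
        apply (rule derivative_eq_intros Drr[OF r] | simp)+
        done
      finally show ?thesis .
    qed
    thus ?thesis using agreeD[OF ag2 r] by simp
  qed
  define Q002 where "Q002 = (\<lambda>x (u::jet). d_t lam x * (bt * F1 (u (0,0,0))) + u (0,0,1) * (lam x * (bt * F2 (u (0,0,0)))))"
  have T002: "Dtot 2 (Dtot 2 M002) (r,z,t) u = (d_t (d_t lam) (r,z,t) * (bt * F1 (u (0,0,0))) + u (0,0,1) * (d_t lam (r,z,t) * (bt * F2 (u (0,0,0)))))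
     + u (0,0,1) * (d_t lam (r,z,t) * (bt * F2 (u (0,0,0))) + u (0,0,1) * (lam (r,z,t) * (bt * F3 (u (0,0,0)))))
     + u (0,0,2) * (lam (r,z,t) * (bt * F2 (u (0,0,0))))"
  proof -
    have ag: "agree (Dtot 2 M002) Q002"
    proof (rule Dtot_eqI[OF _ dM002])
      fix r z t u assume r: "(r::real) > 0"
      have a: "px 2 M002 (r,z,t) u = d_t lam (r,z,t) * (bt * F1 (u (0,0,0)))"
        unfolding px_simps M002_def
        apply (rule DERIV_imp_deriv)
        apply (rule derivative_eq_intros Dt[OF r] | simp)+
        done
      have b: "pu (0,0,0) M002 (r,z,t) u = lam (r,z,t) * (bt * F2 (u (0,0,0)))"
        unfolding pu_def M002_def
        apply (simp add: fun_upd_apply)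
        apply (rule DERIV_imp_deriv)
        apply (rule derivative_eq_intros DF1 | simp)+
        done
      show "px 2 M002 (r,z,t) u + (\<Sum>J\<in>{(0,0,0)}. u (shift 2 J) * pu J M002 (r,z,t) u) = Q002 (r,z,t) u"
        by (simp add: a b Q002_def shift_conc)
    qed simp
    have sh: "shS 2 {(0,0,0)} = {(0,0,0),(0,0,1)}" by (auto simp: shS_def shift_conc)
    have ag2: "agree (Dtot 2 (Dtot 2 M002)) (Dtot 2 Q002)"
      by (rule Dtot_chain[OF _ dM002 _ ag]) (simp_all add: sh dep_def Q002_def)
    have dQ: "dep {(0,0,0),(0,0,1)} Q002" by (simp add: dep_def Q002_def)
    have a: "px 2 Q002 (r,z,t) u = d_t (d_t lam) (r,z,t) * (bt * F1 (u (0,0,0))) + u (0,0,1) * (d_t lam (r,z,t) * (bt * F2 (u (0,0,0))))"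
      unfolding px_simps Q002_def
      apply (rule DERIV_imp_deriv)
      apply (rule derivative_eq_intros Dt[OF r] Dtt[OF r] | simp)+
      done
    have b: "pu (0,0,0) Q002 (r,z,t) u = d_t lam (r,z,t) * (bt * F2 (u (0,0,0))) + u (0,0,1) * (lam (r,z,t) * (bt * F3 (u (0,0,0))))"
      unfolding pu_def Q002_def
      apply (simp add: fun_upd_apply)
      apply (rule DERIV_imp_deriv)
      apply (rule derivative_eq_intros DF1 DF2 | simp)+
      done
    have c: "pu (0,0,1) Q002 (r,z,t) u = lam (r,z,t) * (bt * F2 (u (0,0,0)))"
      unfolding pu_def Q002_def
      apply (simp add: fun_upd_apply)
      apply (rule DERIV_imp_deriv)
      apply (rule derivative_eq_intros | simp)+
      done
    have "Dtot 2 Q002 (r,z,t) u = px 2 Q002 (r,z,t) u + (\<Sum>J\<in>{(0,0,0),(0,0,1)}. u (shift 2 J) * pu J Q002 (r,z,t) u)"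
      by (rule Dtot_S[OF _ dQ]) simp
    also have "\<dots> = (d_t (d_t lam) (r,z,t) * (bt * F1 (u (0,0,0))) + u (0,0,1) * (d_t lam (r,z,t) * (bt * F2 (u (0,0,0)))))
     + u (0,0,1) * (d_t lam (r,z,t) * (bt * F2 (u (0,0,0))) + u (0,0,1) * (lam (r,z,t) * (bt * F3 (u (0,0,0)))))
     + u (0,0,2) * (lam (r,z,t) * (bt * F2 (u (0,0,0))))"
      by (simp add: a b c shift_conc)
    finally show ?thesis using agreeD[OF ag2 r] by simp
  qed
  define Q3a where "Q3a = (\<lambda>x (u::jet). d_t lam x * dl)"
  define Q3b where "Q3b = (\<lambda>x (u::jet). d_t (d_t lam) x * dl)"
  have T003: "Dtot 2 (Dtot 2 (Dtot 2 M003)) (r,z,t) u = d_t (d_t (d_t lam)) (r,z,t) * dl"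
  proof -
    have dQ: "dep {} Q3a" "dep {} Q3b" by (simp_all add: dep_def Q3a_def Q3b_def)
    have ag: "agree (Dtot 2 M003) Q3a"
    proof (rule Dtot_eqI[OF _ dM100(3)])
      fix r z t u assume r: "(r::real) > 0"
      show "px 2 M003 (r,z,t) u + (\<Sum>J\<in>{}. u (shift 2 J) * pu J M003 (r,z,t) u) = Q3a (r,z,t) u"
        unfolding px_simps M003_def Q3a_def
        apply simp
        apply (rule DERIV_imp_deriv)
        apply (rule derivative_eq_intros Dt[OF r] | simp)+
        done
    qed simp
    have ag2: "agree (Dtot 2 (Dtot 2 M003)) (Dtot 2 Q3a)"
      by (rule Dtot_chain[OF _ dM100(3) _ ag]) (simp_all add: dep_empty_shS dQ)
    have ag3: "agree (Dtot 2 Q3a) Q3b"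
    proof (rule Dtot_eqI[OF _ dQ(1)])
      fix r z t u assume r: "(r::real) > 0"
      show "px 2 Q3a (r,z,t) u + (\<Sum>J\<in>{}. u (shift 2 J) * pu J Q3a (r,z,t) u) = Q3b (r,z,t) u"
        unfolding px_simps Q3a_def Q3b_def
        apply simp
        apply (rule DERIV_imp_deriv)
        apply (rule derivative_eq_intros Dtt[OF r] | simp)+
        done
    qed simp
    have ag4: "agree (Dtot 2 (Dtot 2 M003)) Q3b" by (rule agree_trans[OF ag2 ag3])
    have dd: "dep {} (Dtot 2 (Dtot 2 M003))"
      using dep_Dtot[OF _ dep_Dtot[OF _ dM100(3)], of 2 2] by (simp add: dep_empty_shS)
    have ag5: "agree (Dtot 2 (Dtot 2 (Dtot 2 M003))) (Dtot 2 Q3b)"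
      by (rule Dtot_local[OF _ dd dQ(2) ag4]) simp
    have "Dtot 2 Q3b (r,z,t) u = px 2 Q3b (r,z,t) u" by (simp add: Dtot_S[OF finite.emptyI dQ(2)])
    also have "\<dots> = d_t (d_t (d_t lam)) (r,z,t) * dl"
      unfolding px_simps Q3b_def
      apply (rule DERIV_imp_deriv)
      apply (rule derivative_eq_intros Dttt[OF r] | simp)+
      done
    finally show ?thesis using agreeD[OF ag5 r] by simp
  qed
  define Q11 where "Q11 = (\<lambda>x (u::jet). d_t lam x * (- 2 * c0 ^ 3))"
  have T011: "Dtot 1 (Dtot 2 M011) (r,z,t) u = d_z (d_t lam) (r,z,t) * (- 2 * c0 ^ 3)"
  proof -
    have dQ: "dep {} Q11" by (simp add: dep_def Q11_def)
    have ag: "agree (Dtot 2 M011) Q11"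
    proof (rule Dtot_eqI[OF _ dM100(4)])
      fix r z t u assume r: "(r::real) > 0"
      show "px 2 M011 (r,z,t) u + (\<Sum>J\<in>{}. u (shift 2 J) * pu J M011 (r,z,t) u) = Q11 (r,z,t) u"
        unfolding px_simps M011_def Q11_def
        apply simp
        apply (rule DERIV_imp_deriv)
        apply (rule derivative_eq_intros Dt[OF r] | simp)+
        done
    qed simp
    have ag2: "agree (Dtot 1 (Dtot 2 M011)) (Dtot 1 Q11)"
      by (rule Dtot_chain[OF _ dM100(4) _ ag]) (simp_all add: dep_empty_shS dQ)
    have "Dtot 1 Q11 (r,z,t) u = px 1 Q11 (r,z,t) u" by (simp add: Dtot_S[OF finite.emptyI dQ])
    also have "\<dots> = d_z (d_t lam) (r,z,t) * (- 2 * c0 ^ 3)"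
      unfolding px_simps Q11_def
      apply (rule DERIV_imp_deriv)
      apply (rule derivative_eq_intros Dzt[OF r] | simp)+
      done
    finally show ?thesis using agreeD[OF ag2 r] by simp
  qed
  have M0: "M000 (r,z,t) u = lam (r,z,t) * (bt * (F3 (u (0,0,0)) * (u (0,0,1))\<^sup>2 + F2 (u (0,0,0)) * u (0,0,2)))"
    by (simp add: M000_def)
  show ?thesis
    unfolding L_def[symmetric] E M0 T100 T001 T200 T002 T003 T011
    using r by (simp add: F1_def field_simps power2_eq_square)
qed


declare One_nat_def[simp del]

definition e1 :: "real \<times> real" where "e1 = (1,0)"
definition e2 :: "real \<times> real" where "e2 = (0,1)"

lemma basis_2: "e1 \<in> Basis" "e2 \<in> Basis"
  by (auto simp: e1_def e2_def Basis_prod_def zero_prod_def)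

lemma pdir_e1: "pdir e1 g = d2_r g"
proof (intro ext)
  fix x :: "real \<times> real" obtain r z where x: "x = (r,z)" by (cases x) auto
  have "pdir e1 g x = deriv (\<lambda>s. g (r + s, z)) 0" by (simp add: pdir_def x e1_def)
  also have "\<dots> = deriv (\<lambda>s. g (s, z)) r" by (rule deriv_shift0[of "\<lambda>s. g (s,z)"])
  also have "\<dots> = d2_r g x" by (simp add: d2_r_def x)
  finally show "pdir e1 g x = d2_r g x" .
qed

lemma pdir_e2: "pdir e2 g = d2_z g"
proof (intro ext)
  fix x :: "real \<times> real" obtain r z where x: "x = (r,z)" by (cases x) auto
  have "pdir e2 g x = deriv (\<lambda>s. g (r, z + s)) 0" by (simp add: pdir_def x e2_def)
  also have "\<dots> = deriv (\<lambda>s. g (r, s)) z" by (rule deriv_shift0[of "\<lambda>s. g (r,s)"])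
  also have "\<dots> = d2_z g x" by (simp add: d2_z_def x)
  finally show "pdir e2 g x = d2_z g x" .
qed

lemma Cinf2_diff_r: assumes "Cinf_on {w::real\<times>real. fst w > 0} g" "set ks \<subseteq> Basis" "r > 0"
  shows "(\<lambda>s. iterpd ks g (s,z)) differentiable (at r)"
proof -
  have "(\<lambda>s. iterpd ks g ((r,z) + s *\<^sub>R e1)) differentiable (at 0)"
    using Cinf_diff[OF assms(1,2) basis_2(1)] assms(3) by simp
  hence "(\<lambda>s. iterpd ks g (r + s, z)) differentiable (at 0)" by (simp add: e1_def)
  thus ?thesis using diff_shift0[of "\<lambda>s. iterpd ks g (s,z)"] by simp
qed

lemma Cinf2_diff_z: assumes "Cinf_on {w::real\<times>real. fst w > 0} g" "set ks \<subseteq> Basis" "r > 0"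
  shows "(\<lambda>s. iterpd ks g (r,s)) differentiable (at z)"
proof -
  have "(\<lambda>s. iterpd ks g ((r,z) + s *\<^sub>R e2)) differentiable (at 0)"
    using Cinf_diff[OF assms(1,2) basis_2(2)] assms(3) by simp
  hence "(\<lambda>s. iterpd ks g (r, z + s)) differentiable (at 0)" by (simp add: e2_def)
  thus ?thesis using diff_shift0[of "\<lambda>s. iterpd ks g (r,s)"] by simp
qed

lemma diff_cong_ev:
  fixes f g :: "real \<Rightarrow> real"
  assumes "f differentiable (at x)" "eventually (\<lambda>y. f y = g y) (nhds x)"
  shows "g differentiable (at x)"
proof -
  obtain D where "(f has_real_derivative D) (at x)" using assms(1) real_differentiable_def by blast
  hence "(g has_real_derivative D) (at x)" using DERIV_cong_ev[OF refl assms(2) refl] by blast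
  thus ?thesis using real_differentiable_def by blast
qed

lemma euler_expand8:
  assumes "dep {(0,0,0),(1,0,0),(0,1,0),(0,0,1),(2,0,0),(0,0,2),(0,0,3),(0,1,1)} L"
  shows "euler L x u = pu (0,0,0) L x u - Dtot 0 (pu (1,0,0) L) x u - Dtot 1 (pu (0,1,0) L) x u
     - Dtot 2 (pu (0,0,1) L) x u
     + Dtot 0 (Dtot 0 (pu (2,0,0) L)) x u + Dtot 2 (Dtot 2 (pu (0,0,2) L)) x u
     - Dtot 2 (Dtot 2 (Dtot 2 (pu (0,0,3) L))) x u + Dtot 1 (Dtot 2 (pu (0,1,1) L)) x u"
  by (simp add: euler_S[OF _ assms] jord_def Dmulti_conc)

lemma multiplier_if:
  fixes Lam :: "pt \<times> (real \<times> real \<times> real \<times> real) \<Rightarrow> real"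
  assumes c0: "c0 > 0"
    and dF: "\<And>x. F differentiable (at x)" and dF1: "\<And>x. deriv F differentiable (at x)"
    and dF2: "\<And>x. deriv (deriv F) differentiable (at x)"
    and phi: "Cinf_on {w. fst w > 0} \<phi>" and psi: "Cinf_on {w. fst w > 0} \<psi>"
    and lamdef: "\<forall>r z t w. r > 0 \<longrightarrow> Lam ((r, z, t), w) = \<phi> (r, z) + t * \<psi> (r, z)"
    and ode1: "\<forall>r z. r > 0 \<longrightarrow>
               d2_r (d2_r \<phi>) (r, z) - 2 * m / r * d2_r \<phi> (r, z) + 2 * m / r ^ 2 * \<phi> (r, z)
                 = 2 / c0 * d2_z \<psi> (r, z)"
    and ode2: "\<forall>r z. r > 0 \<longrightarrow>
               d2_r (d2_r \<psi>) (r, z) - 2 * m / r * d2_r \<psi> (r, z) + 2 * m / r ^ 2 * \<psi> (r, z) = 0"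
  shows "is_multiplier c0 dl bt m F Lam"
proof -
  define lam where "lam = (\<lambda>x::pt. case x of (r,z,t) \<Rightarrow> \<phi> (r,z) + t * \<psi> (r,z))"
  have lam: "lam (r,z,t) = \<phi> (r,z) + t * \<psi> (r,z)" for r z t by (simp add: lam_def)
  have phr: "r > 0 \<Longrightarrow> (\<lambda>s. \<phi> (s,z)) differentiable (at r)" for r z using Cinf2_diff_r[OF phi, of "[]"] by simp
  have psr: "r > 0 \<Longrightarrow> (\<lambda>s. \<psi> (s,z)) differentiable (at r)" for r z using Cinf2_diff_r[OF psi, of "[]"] by simp
  have phrr: "r > 0 \<Longrightarrow> (\<lambda>s. d2_r \<phi> (s,z)) differentiable (at r)" for r z
    using Cinf2_diff_r[OF phi, of "[e1]"] basis_2 by (simp add: pdir_e1)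
  have psrr: "r > 0 \<Longrightarrow> (\<lambda>s. d2_r \<psi> (s,z)) differentiable (at r)" for r z
    using Cinf2_diff_r[OF psi, of "[e1]"] basis_2 by (simp add: pdir_e1)
  have psz: "r > 0 \<Longrightarrow> (\<lambda>s. \<psi> (r,s)) differentiable (at z)" for r z using Cinf2_diff_z[OF psi, of "[]"] by simp
  have Dphr: "r > 0 \<Longrightarrow> ((\<lambda>s. \<phi> (s,z)) has_real_derivative d2_r \<phi> (r,z)) (at r)" for r z
    using has_deriv_of_diff[OF phr] by (simp add: d2_r_def)
  have Dpsr: "r > 0 \<Longrightarrow> ((\<lambda>s. \<psi> (s,z)) has_real_derivative d2_r \<psi> (r,z)) (at r)" for r z
    using has_deriv_of_diff[OF psr] by (simp add: d2_r_def)
  have Dphrr: "r > 0 \<Longrightarrow> ((\<lambda>s. d2_r \<phi> (s,z)) has_real_derivative d2_r (d2_r \<phi>) (r,z)) (at r)" for r z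
    using has_deriv_of_diff[OF phrr] by (simp add: d2_r_def[of "d2_r \<phi>"])
  have Dpsrr: "r > 0 \<Longrightarrow> ((\<lambda>s. d2_r \<psi> (s,z)) has_real_derivative d2_r (d2_r \<psi>) (r,z)) (at r)" for r z
    using has_deriv_of_diff[OF psrr] by (simp add: d2_r_def[of "d2_r \<psi>"])
  have lr: "d_r lam (r,z,t) = d2_r \<phi> (r,z) + t * d2_r \<psi> (r,z)" if "r > 0" for r z t
  proof -
    have "d_r lam (r,z,t) = deriv (\<lambda>s. \<phi> (s,z) + t * \<psi> (s,z)) r" by (simp add: d_r_def lam)
    also have "\<dots> = d2_r \<phi> (r,z) + t * d2_r \<psi> (r,z)"
      by (rule DERIV_imp_deriv) (rule derivative_eq_intros Dphr[OF that] Dpsr[OF that] refl | simp)+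
    finally show ?thesis .
  qed
  have lrr: "d_r (d_r lam) (r,z,t) = d2_r (d2_r \<phi>) (r,z) + t * d2_r (d2_r \<psi>) (r,z)" if "r > 0" for r z t
  proof -
    have "d_r (d_r lam) (r,z,t) = deriv (\<lambda>s. d_r lam (s,z,t)) r" by (simp add: d_r_def[of "d_r lam"])
    also have "\<dots> = deriv (\<lambda>s. d2_r \<phi> (s,z) + t * d2_r \<psi> (s,z)) r"
      by (rule deriv_cong_ev[OF _ refl]) (use eventually_pos_nhds[OF that] lr in \<open>auto elim: eventually_mono\<close>)
    also have "\<dots> = d2_r (d2_r \<phi>) (r,z) + t * d2_r (d2_r \<psi>) (r,z)"
      by (rule DERIV_imp_deriv) (rule derivative_eq_intros Dphrr[OF that] Dpsrr[OF that] refl | simp)+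
    finally show ?thesis .
  qed
  have lt: "d_t lam (r,z,t) = \<psi> (r,z)" for r z t
  proof -
    have "d_t lam (r,z,t) = deriv (\<lambda>s. \<phi> (r,z) + s * \<psi> (r,z)) t" by (simp add: d_t_def lam)
    also have "\<dots> = \<psi> (r,z)" by (rule DERIV_imp_deriv) (rule derivative_eq_intros refl | simp)+
    finally show ?thesis .
  qed
  have ltt: "d_t (d_t lam) (r,z,t) = 0" for r z t by (simp add: d_t_def[of "d_t lam"] lt)
  have lttt: "d_t (d_t (d_t lam)) (r,z,t) = 0" for r z t by (simp add: d_t_def[of "d_t (d_t lam)"] ltt)
  have lzt: "d_z (d_t lam) (r,z,t) = d2_z \<psi> (r,z)" for r z t by (simp add: d_z_def d2_z_def lt)
  have hr: "(\<lambda>s. lam (s,z,t)) differentiable (at r)" if "r > 0" for r z t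
    unfolding lam using phr[OF that] psr[OF that] by (intro derivative_intros) auto
  have hrr: "(\<lambda>s. d_r lam (s,z,t)) differentiable (at r)" if "r > 0" for r z t
  proof (rule diff_cong_ev)
    show "(\<lambda>s. d2_r \<phi> (s,z) + t * d2_r \<psi> (s,z)) differentiable (at r)"
      using phrr[OF that] psrr[OF that] by (intro derivative_intros) auto
    show "\<forall>\<^sub>F y in nhds r. d2_r \<phi> (y, z) + t * d2_r \<psi> (y, z) = d_r lam (y, z, t)"
      using eventually_pos_nhds[OF that] lr by (auto elim: eventually_mono)
  qed
  have ht: "(\<lambda>s. lam (r,z,s)) differentiable (at t)" for r z t
    unfolding lam by (intro derivative_intros)
  have htt: "(\<lambda>s. d_t lam (r,z,s)) differentiable (at t)" for r z t
    unfolding lt by (intro derivative_intros)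
  have httt: "(\<lambda>s. d_t (d_t lam) (r,z,s)) differentiable (at t)" for r z t
    unfolding ltt by (intro derivative_intros)
  have hzt: "(\<lambda>s. d_t lam (r,s,t)) differentiable (at z)" if "r > 0" for r z t
    unfolding lt using psz[OF that] .
  define L where "L = (\<lambda>y v. Lam (y, (v (0,0,0), v (1,0,0), v (0,1,0), v (0,0,1))) * kzkE c0 dl bt m F y v)"
  define L2 where "L2 = (\<lambda>x u. lam x * Eexp c0 dl bt m F x u)"
  define SL :: "(nat \<times> nat \<times> nat) set" where "SL = {(0,0,0),(1,0,0),(0,1,0),(0,0,1),(2,0,0),(0,0,2),(0,0,3),(0,1,1)}"
  have kz: "kzkE c0 dl bt m F = Eexp c0 dl bt m F" by (rule kzkE_eq[OF dF dF1])
  have dL: "dep SL L" by (simp add: dep_def SL_def L_def kz Eexp_def)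
  have dL2: "dep SL L2" by (simp add: dep_def SL_def L2_def Eexp_def)
  have ag: "agree L L2"
    unfolding agree_def L_def L2_def kz
  proof (intro allI impI)
    fix x :: pt and u :: jet assume "fst x > 0"
    then obtain r z t where x: "x = (r,z,t)" "r > 0" by (cases x) auto
    show "Lam (x, u (0,0,0), u (1,0,0), u (0,1,0), u (0,0,1)) * Eexp c0 dl bt m F x u = lam x * Eexp c0 dl bt m F x u"
      using lamdef x by (simp add: lam)
  qed
  have agE: "agree (euler L) (euler L2)" by (rule euler_local[OF _ dL dL2 ag]) (simp add: SL_def)
  show ?thesis unfolding is_multiplier_def
  proof (intro allI impI)
    fix x :: pt and u :: jet assume "fst x > 0"
    then obtain r z t where x: "x = (r,z,t)" and r: "r > 0" by (cases x) auto
    have "euler L x u = euler L2 x u" using agE x r by (simp add: agree_def)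
    also have "\<dots> = c0 ^ 4 * (d_r (d_r lam) (r,z,t) - 2 * m * d_r lam (r,z,t) / r + 2 * m * lam (r,z,t) / r ^ 2)
     - dl * d_t (d_t (d_t lam)) (r,z,t) + bt * deriv F (u (0,0,0)) * d_t (d_t lam) (r,z,t)
     - 2 * c0 ^ 3 * d_z (d_t lam) (r,z,t)"
      unfolding x L2_def by (rule euler_lamE[OF dF dF1 dF2 hr hrr ht htt httt hzt r])
    also have "\<dots> = c0 ^ 4 * ((d2_r (d2_r \<phi>) (r, z) - 2 * m / r * d2_r \<phi> (r, z) + 2 * m / r ^ 2 * \<phi> (r, z))
        + t * (d2_r (d2_r \<psi>) (r, z) - 2 * m / r * d2_r \<psi> (r, z) + 2 * m / r ^ 2 * \<psi> (r, z)))
        - 2 * c0 ^ 3 * d2_z \<psi> (r,z)"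
      using r by (simp add: lr lrr lam ltt lttt lzt) (simp add: field_simps; algebra)
    also have "\<dots> = c0 ^ 4 * (2 / c0 * d2_z \<psi> (r, z) + t * 0) - 2 * c0 ^ 3 * d2_z \<psi> (r,z)"
      using ode1 ode2 r by simp
    also have "\<dots> = 0" using c0 by (simp add: field_simps power3_eq_cube power4_eq_xxxx)
    finally show "euler (\<lambda>y v. Lam (y, v (0,0,0), v (1,0,0), v (0,1,0), v (0,0,1)) * kzkE c0 dl bt m F y v) x u = 0"
      by (simp add: L_def)
  qed
qed


declare One_nat_def[simp del]

type_synonym lamt = "pt \<times> (real \<times> real \<times> real \<times> real) \<Rightarrow> real"

definition LP1 :: "lamt \<Rightarrow> pt \<Rightarrow> real \<times> real \<times> real \<times> real \<Rightarrow> real" where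
  "LP1 Lam x w = (case w of (a,b,c,d) \<Rightarrow> deriv (\<lambda>s. Lam (x,(s,b,c,d))) a)"
definition LP2 :: "lamt \<Rightarrow> pt \<Rightarrow> real \<times> real \<times> real \<times> real \<Rightarrow> real" where
  "LP2 Lam x w = (case w of (a,b,c,d) \<Rightarrow> deriv (\<lambda>s. Lam (x,(a,s,c,d))) b)"
definition LP3 :: "lamt \<Rightarrow> pt \<Rightarrow> real \<times> real \<times> real \<times> real \<Rightarrow> real" where
  "LP3 Lam x w = (case w of (a,b,c,d) \<Rightarrow> deriv (\<lambda>s. Lam (x,(a,b,s,d))) c)"
definition LP4 :: "lamt \<Rightarrow> pt \<Rightarrow> real \<times> real \<times> real \<times> real \<Rightarrow> real" where
  "LP4 Lam x w = (case w of (a,b,c,d) \<Rightarrow> deriv (\<lambda>s. Lam (x,(a,b,c,s))) d)"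

lemma Lam_derivs:
  fixes Lam :: lamt
  assumes cL: "Cinf_on {y. fst (fst y) > 0} Lam" and x: "fst x > 0"
  shows "((\<lambda>s. Lam (x,(s,b,c,d))) has_real_derivative LP1 Lam x (a,b,c,d)) (at a)"
    "((\<lambda>s. Lam (x,(a,s,c,d))) has_real_derivative LP2 Lam x (a,b,c,d)) (at b)"
    "((\<lambda>s. Lam (x,(a,b,s,d))) has_real_derivative LP3 Lam x (a,b,c,d)) (at c)"
    "((\<lambda>s. Lam (x,(a,b,c,s))) has_real_derivative LP4 Lam x (a,b,c,d)) (at d)"
proof -
  have B: "((0::pt),(1::real,0::real,0::real,0::real)) \<in> Basis" "((0::pt),(0::real,1::real,0::real,0::real)) \<in> Basis"
     "((0::pt),(0::real,0::real,1::real,0::real)) \<in> Basis" "((0::pt),(0::real,0::real,0::real,1::real)) \<in> Basis"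
    by (auto simp: Basis_prod_def zero_prod_def)
  have xin: "(x,(a,b,c,d)) \<in> {y. fst (fst y) > 0}" using x by simp
  have "(\<lambda>s. Lam ((x,(a,b,c,d)) + s *\<^sub>R ((0::pt),(1::real,0::real,0::real,0::real)))) differentiable (at 0)"
    using Cinf_diff[OF cL _ B(1) xin, of "[]"] by simp
  hence "(\<lambda>s. Lam (x,(a + s,b,c,d))) differentiable (at 0)" by simp
  hence "(\<lambda>s. Lam (x,(s,b,c,d))) differentiable (at a)" using diff_shift0[of "\<lambda>s. Lam (x,(s,b,c,d))"] by simp
  thus "((\<lambda>s. Lam (x,(s,b,c,d))) has_real_derivative LP1 Lam x (a,b,c,d)) (at a)"
    unfolding LP1_def by (simp add: has_deriv_of_diff)
  have "(\<lambda>s. Lam ((x,(a,b,c,d)) + s *\<^sub>R ((0::pt),(0::real,1::real,0::real,0::real)))) differentiable (at 0)"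
    using Cinf_diff[OF cL _ B(2) xin, of "[]"] by simp
  hence "(\<lambda>s. Lam (x,(a,b + s,c,d))) differentiable (at 0)" by simp
  hence "(\<lambda>s. Lam (x,(a,s,c,d))) differentiable (at b)" using diff_shift0[of "\<lambda>s. Lam (x,(a,s,c,d))"] by simp
  thus "((\<lambda>s. Lam (x,(a,s,c,d))) has_real_derivative LP2 Lam x (a,b,c,d)) (at b)"
    unfolding LP2_def by (simp add: has_deriv_of_diff)
  have "(\<lambda>s. Lam ((x,(a,b,c,d)) + s *\<^sub>R ((0::pt),(0::real,0::real,1::real,0::real)))) differentiable (at 0)"
    using Cinf_diff[OF cL _ B(3) xin, of "[]"] by simp
  hence "(\<lambda>s. Lam (x,(a,b,c + s,d))) differentiable (at 0)" by simp
  hence "(\<lambda>s. Lam (x,(a,b,s,d))) differentiable (at c)" using diff_shift0[of "\<lambda>s. Lam (x,(a,b,s,d))"] by simp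
  thus "((\<lambda>s. Lam (x,(a,b,s,d))) has_real_derivative LP3 Lam x (a,b,c,d)) (at c)"
    unfolding LP3_def by (simp add: has_deriv_of_diff)
  have "(\<lambda>s. Lam ((x,(a,b,c,d)) + s *\<^sub>R ((0::pt),(0::real,0::real,0::real,1::real)))) differentiable (at 0)"
    using Cinf_diff[OF cL _ B(4) xin, of "[]"] by simp
  hence "(\<lambda>s. Lam (x,(a,b,c,d + s))) differentiable (at 0)" by simp
  hence "(\<lambda>s. Lam (x,(a,b,c,s))) differentiable (at d)" using diff_shift0[of "\<lambda>s. Lam (x,(a,b,c,s))"] by simp
  thus "((\<lambda>s. Lam (x,(a,b,c,s))) has_real_derivative LP4 Lam x (a,b,c,d)) (at d)"
    unfolding LP4_def by (simp add: has_deriv_of_diff)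
qed

lemma affine_zero: "(\<And>s::real. f s = f0 + (s - a) * c) \<Longrightarrow> (\<And>s. f s = 0) \<Longrightarrow> c = 0"
proof -
  assume h: "\<And>s::real. f s = f0 + (s - a) * c" "\<And>s. f s = 0"
  have "f0 = 0" using h[of a] by simp
  thus "c = 0" using h[of "a + 1"] by simp
qed

lemma step1:
  fixes Lam :: lamt
  assumes dl: "dl > 0" and dF: "\<And>x. F differentiable (at x)" and dF1: "\<And>x. deriv F differentiable (at x)"
    and dF2: "\<And>x. deriv (deriv F) differentiable (at x)"
    and cL: "Cinf_on {y. fst (fst y) > 0} Lam"
    and mult: "\<forall>x u. fst x > 0 \<longrightarrow> euler (\<lambda>y v. Lam (y, (v (0,0,0), v (1,0,0), v (0,1,0), v (0,0,1))) * Eexp c0 dl bt m F y v) x u = 0"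
    and x: "fst x > 0"
  shows "LP2 Lam x w = 0 \<and> LP3 Lam x w = 0 \<and> LP4 Lam x w = 0"
proof -
  define F1 where "F1 = deriv F"
  define F2 where "F2 = deriv F1"
  define F3 where "F3 = deriv F2"
  have DF1: "\<And>x. (F1 has_real_derivative F2 x) (at x)" unfolding F2_def F1_def using has_deriv_of_diff[OF dF1] .
  have DF2: "\<And>x. (F2 has_real_derivative F3 x) (at x)" unfolding F3_def F2_def F1_def using has_deriv_of_diff[OF dF2] .
  note DL = Lam_derivs[OF cL x]
  define L where "L = (\<lambda>y v. Lam (y, (v (0,0,0), v (1,0,0), v (0,1,0), v (0,0,1))) * Eexp c0 dl bt m F y v)"
  define SL :: "(nat \<times> nat \<times> nat) set" where "SL = {(0,0,0),(1,0,0),(0,1,0),(0,0,1),(2,0,0),(0,0,2),(0,0,3),(0,1,1)}"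
  define S0 :: "(nat \<times> nat \<times> nat) set" where "S0 = {(0,0,0),(1,0,0),(0,1,0),(0,0,1)}"
  have fSL: "finite SL" and fS0: "finite S0" by (simp_all add: SL_def S0_def)
  have dL: "dep {(0,0,0),(1,0,0),(0,1,0),(0,0,1),(2,0,0),(0,0,2),(0,0,3),(0,1,1)} L"
    by (simp add: dep_def L_def Eexp_def)
  hence dL': "dep SL L" by (simp add: SL_def)
  have EF: "Eexp c0 dl bt m F = (\<lambda>x u. c0 ^ 4 * (u (2,0,0) + u (1,0,0) * (2 * m / fst x)) + dl * u (0,0,3)
     + bt * (F2 (u (0,0,0)) * (u (0,0,1))\<^sup>2 + F1 (u (0,0,0)) * u (0,0,2))
     - 2 * c0 ^ 3 * u (0,1,1))" by (intro ext) (simp add: Eexp_def F1_def F2_def ac_simps)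
  define N3 where "N3 = (\<lambda>x (u::jet). Lam (x, (u (0,0,0), u (1,0,0), u (0,1,0), u (0,0,1))) * dl)"
  define N200 where "N200 = (\<lambda>x (u::jet). Lam (x, (u (0,0,0), u (1,0,0), u (0,1,0), u (0,0,1))) * c0 ^ 4)"
  define N002 where "N002 = (\<lambda>x (u::jet). Lam (x, (u (0,0,0), u (1,0,0), u (0,1,0), u (0,0,1))) * (bt * F1 (u (0,0,0))))"
  define N011 where "N011 = (\<lambda>x (u::jet). Lam (x, (u (0,0,0), u (1,0,0), u (0,1,0), u (0,0,1))) * (- 2 * c0 ^ 3))"
  have PN: "pu (0,0,3) L = N3" "pu (2,0,0) L = N200" "pu (0,0,2) L = N002" "pu (0,1,1) L = N011"
  proof -
    show "pu (0,0,3) L = N3"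
      unfolding pu_def L_def EF N3_def
      apply (intro ext)
      apply (simp add: fun_upd_apply)
      apply (rule DERIV_imp_deriv)
      apply (rule derivative_eq_intros | simp)+
      done
    show "pu (2,0,0) L = N200"
      unfolding pu_def L_def EF N200_def
      apply (intro ext)
      apply (simp add: fun_upd_apply)
      apply (rule DERIV_imp_deriv)
      apply (rule derivative_eq_intros | simp)+
      done
    show "pu (0,0,2) L = N002"
      unfolding pu_def L_def EF N002_def
      apply (intro ext)
      apply (simp add: fun_upd_apply)
      apply (rule DERIV_imp_deriv)
      apply (rule derivative_eq_intros | simp)+
      done
    show "pu (0,1,1) L = N011"
      unfolding pu_def L_def EF N011_def
      apply (intro ext)
      apply (simp add: fun_upd_apply)
      apply (rule DERIV_imp_deriv)
      apply (rule derivative_eq_intros | simp)+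
      done
  qed
  have dN: "dep S0 N3" "dep S0 N200" "dep S0 N002" "dep S0 N011"
    by (simp_all add: dep_def S0_def N3_def N200_def N002_def N011_def)
  have N001: "pu (0,0,1) L x v = LP4 Lam x (v (0,0,0), v (1,0,0), v (0,1,0), v (0,0,1)) * Eexp c0 dl bt m F x v
      + Lam (x, (v (0,0,0), v (1,0,0), v (0,1,0), v (0,0,1))) * (bt * (F2 (v (0,0,0)) * (2 * v (0,0,1))))" for v
    unfolding pu_def L_def EF
    apply (simp add: fun_upd_apply)
    apply (rule DERIV_imp_deriv)
    apply (rule derivative_eq_intros DL | simp)+
    done
  have N100: "pu (1,0,0) L x v = LP2 Lam x (v (0,0,0), v (1,0,0), v (0,1,0), v (0,0,1)) * Eexp c0 dl bt m F x v
      + Lam (x, (v (0,0,0), v (1,0,0), v (0,1,0), v (0,0,1))) * (c0 ^ 4 * (2 * m / fst x))" for v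
    unfolding pu_def L_def EF
    apply (simp add: fun_upd_apply del: times_divide_eq_right)
    apply (rule DERIV_imp_deriv)
    apply (rule derivative_eq_intros DL | simp del: times_divide_eq_right)+
    apply (simp add: algebra_simps)
    done
  have N010: "pu (0,1,0) L x v = LP3 Lam x (v (0,0,0), v (1,0,0), v (0,1,0), v (0,0,1)) * Eexp c0 dl bt m F x v" for v
    unfolding pu_def L_def EF
    apply (simp add: fun_upd_apply del: times_divide_eq_right)
    apply (rule DERIV_imp_deriv)
    apply (rule derivative_eq_intros DL | simp del: times_divide_eq_right)+
    done
  have s001: "pu (0,0,3) (pu (0,0,1) L) x u = LP4 Lam x (u (0,0,0), u (1,0,0), u (0,1,0), u (0,0,1)) * dl" for u
    unfolding pu_def[of "(0,0,3)"] N001 EF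
    apply (simp add: fun_upd_apply)
    apply (rule DERIV_imp_deriv)
    apply (rule derivative_eq_intros | simp)+
    done
  have s100: "pu (0,0,3) (pu (1,0,0) L) x u = LP2 Lam x (u (0,0,0), u (1,0,0), u (0,1,0), u (0,0,1)) * dl" for u
    unfolding pu_def[of "(0,0,3)"] N100 EF
    apply (simp add: fun_upd_apply del: times_divide_eq_right)
    apply (rule DERIV_imp_deriv)
    apply (rule derivative_eq_intros | simp del: times_divide_eq_right)+
    done
  have s010: "pu (0,0,3) (pu (0,1,0) L) x u = LP3 Lam x (u (0,0,0), u (1,0,0), u (0,1,0), u (0,0,1)) * dl" for u
    unfolding pu_def[of "(0,0,3)"] N010 EF
    apply (simp add: fun_upd_apply del: times_divide_eq_right)
    apply (rule DERIV_imp_deriv)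
    apply (rule derivative_eq_intros | simp del: times_divide_eq_right)+
    done
  have t4: "pu (0,0,1) N3 x u = LP4 Lam x (u (0,0,0), u (1,0,0), u (0,1,0), u (0,0,1)) * dl" for u
    unfolding pu_def N3_def
    apply (simp add: fun_upd_apply)
    apply (rule DERIV_imp_deriv)
    apply (rule derivative_eq_intros DL | simp)+
    done
  have t2: "pu (1,0,0) N3 x u = LP2 Lam x (u (0,0,0), u (1,0,0), u (0,1,0), u (0,0,1)) * dl" for u
    unfolding pu_def N3_def
    apply (simp add: fun_upd_apply)
    apply (rule DERIV_imp_deriv)
    apply (rule derivative_eq_intros DL | simp)+
    done
  have t3: "pu (0,1,0) N3 x u = LP3 Lam x (u (0,0,0), u (1,0,0), u (0,1,0), u (0,0,1)) * dl" for u
    unfolding pu_def N3_def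
    apply (simp add: fun_upd_apply)
    apply (rule DERIV_imp_deriv)
    apply (rule derivative_eq_intros DL | simp)+
    done
  have dP: "dep SL (pu J L)" for J by (rule dep_pu[OF dL'])
  have fS1: "finite (shS 2 S0)" by (rule finite_shS[OF fS0])
  have d3a: "dep (shS 2 S0) (Dtot 2 N3)" by (rule dep_Dtot[OF fS0 dN(1)])
  have d3b: "dep (shS 2 (shS 2 S0)) (Dtot 2 (Dtot 2 N3))" by (rule dep_Dtot[OF fS1 d3a])
  have fS2: "finite (shS 2 (shS 2 S0))" by (rule finite_shS[OF fS1])
  have C000: "K \<notin> SL \<Longrightarrow> pu (0,0,0) L x (u(K:=s)) = pu (0,0,0) L x u" for K s u
    by (rule dep_upd[OF dP])
  have C100: "K \<notin> shS 0 SL \<Longrightarrow> Dtot 0 (pu (1,0,0) L) x (u(K:=s)) = Dtot 0 (pu (1,0,0) L) x u" for K s u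
    by (rule dep_upd[OF dep_Dtot[OF fSL dP]])
  have C010: "K \<notin> shS 1 SL \<Longrightarrow> Dtot 1 (pu (0,1,0) L) x (u(K:=s)) = Dtot 1 (pu (0,1,0) L) x u" for K s u
    by (rule dep_upd[OF dep_Dtot[OF fSL dP]])
  have C001: "K \<notin> shS 2 SL \<Longrightarrow> Dtot 2 (pu (0,0,1) L) x (u(K:=s)) = Dtot 2 (pu (0,0,1) L) x u" for K s u
    by (rule dep_upd[OF dep_Dtot[OF fSL dP]])
  have A100: "K \<notin> SL \<Longrightarrow> shift 0 J0 = K \<Longrightarrow> Dtot 0 (pu (1,0,0) L) x (u(K:=s)) = Dtot 0 (pu (1,0,0) L) x u + (s - u K) * pu J0 (pu (1,0,0) L) x u" for K J0 s u
    by (rule Dtot_affine[OF fSL dP])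
  have A010: "K \<notin> SL \<Longrightarrow> shift 1 J0 = K \<Longrightarrow> Dtot 1 (pu (0,1,0) L) x (u(K:=s)) = Dtot 1 (pu (0,1,0) L) x u + (s - u K) * pu J0 (pu (0,1,0) L) x u" for K J0 s u
    by (rule Dtot_affine[OF fSL dP])
  have A001: "K \<notin> SL \<Longrightarrow> shift 2 J0 = K \<Longrightarrow> Dtot 2 (pu (0,0,1) L) x (u(K:=s)) = Dtot 2 (pu (0,0,1) L) x u + (s - u K) * pu J0 (pu (0,0,1) L) x u" for K J0 s u
    by (rule Dtot_affine[OF fSL dP])
  have C200: "K \<notin> shS 0 (shS 0 S0) \<Longrightarrow> Dtot 0 (Dtot 0 N200) x (u(K:=s)) = Dtot 0 (Dtot 0 N200) x u" for K s u
    by (rule dep_upd[OF dep_Dtot[OF finite_shS[OF fS0] dep_Dtot[OF fS0 dN(2)]]])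
  have C002: "K \<notin> shS 2 (shS 2 S0) \<Longrightarrow> Dtot 2 (Dtot 2 N002) x (u(K:=s)) = Dtot 2 (Dtot 2 N002) x u" for K s u
    by (rule dep_upd[OF dep_Dtot[OF finite_shS[OF fS0] dep_Dtot[OF fS0 dN(3)]]])
  have C011: "K \<notin> shS 1 (shS 2 S0) \<Longrightarrow> Dtot 1 (Dtot 2 N011) x (u(K:=s)) = Dtot 1 (Dtot 2 N011) x u" for K s u
    by (rule dep_upd[OF dep_Dtot[OF finite_shS[OF fS0] dep_Dtot[OF fS0 dN(4)]]])
  have A003: "K \<notin> shS 2 (shS 2 S0) \<Longrightarrow> shift 2 J0 = K \<Longrightarrow> Dtot 2 (Dtot 2 (Dtot 2 N3)) x (u(K:=s)) = Dtot 2 (Dtot 2 (Dtot 2 N3)) x u + (s - u K) * pu J0 (Dtot 2 (Dtot 2 N3)) x u" for K J0 s u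
    by (rule Dtot_affine[OF fS2 d3b])
  have P2: "K \<notin> shS 2 S0 \<Longrightarrow> shift 2 J0 = K \<Longrightarrow> pu K (Dtot 2 (Dtot 2 N3)) x u = pu J0 (Dtot 2 N3) x u" for K J0 u
    by (rule pu_Dtot[OF fS1 d3a])
  have P1: "K \<notin> S0 \<Longrightarrow> shift 2 J0 = K \<Longrightarrow> pu K (Dtot 2 N3) x u = pu J0 N3 x u" for K J0 u
    by (rule pu_Dtot[OF fS0 dN(1)])
  have E8: "euler L x v = pu (0,0,0) L x v - Dtot 0 (pu (1,0,0) L) x v - Dtot 1 (pu (0,1,0) L) x v
     - Dtot 2 (pu (0,0,1) L) x v
     + Dtot 0 (Dtot 0 N200) x v + Dtot 2 (Dtot 2 N002) x v
     - Dtot 2 (Dtot 2 (Dtot 2 N3)) x v + Dtot 1 (Dtot 2 N011) x v" for v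
    using euler_expand8[OF dL, of x v] by (simp add: PN)
  have z: "euler L x v = 0" for v using mult x unfolding L_def by blast
  have Z4: "LP4 Lam x (u (0,0,0), u (1,0,0), u (0,1,0), u (0,0,1)) = 0" for u :: jet
  proof -
    let ?K = "(0,0,4) :: nat \<times> nat \<times> nat"
    have memb: "?K \<notin> SL" "?K \<notin> shS 0 SL" "?K \<notin> shS 1 SL" "?K \<notin> shS 0 (shS 0 S0)"
      "?K \<notin> shS 2 (shS 2 S0)" "?K \<notin> shS 1 (shS 2 S0)" "(0,0,3) \<notin> shS 2 S0" "(0,0,2) \<notin> S0"
      by (simp_all add: SL_def S0_def shS_def shift_conc)
    have sh: "shift 2 (0,0,3) = ?K" "shift 2 (0,0,2) = (0,0,3)" "shift 2 (0,0,1) = (0,0,2)" by (simp_all add: shift_conc)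
    note e1 = C000[OF memb(1)] C100[OF memb(2)] C010[OF memb(3)] C200[OF memb(4)] C002[OF memb(5)] C011[OF memb(6)]
      A001[OF memb(1) sh(1)] A003[OF memb(5) sh(1)]
    note e2 = P2[OF memb(7) sh(2)] P1[OF memb(8) sh(3)]
    have "euler L x (u(?K:=s)) = euler L x u + (s - u ?K) * (- (LP4 Lam x (u (0,0,0), u (1,0,0), u (0,1,0), u (0,0,1)) * dl) - LP4 Lam x (u (0,0,0), u (1,0,0), u (0,1,0), u (0,0,1)) * dl)" for s
      unfolding E8 e1 e2 s001 t4 by (simp add: algebra_simps)
    hence "- (LP4 Lam x (u (0,0,0), u (1,0,0), u (0,1,0), u (0,0,1)) * dl) - LP4 Lam x (u (0,0,0), u (1,0,0), u (0,1,0), u (0,0,1)) * dl = 0"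
      by (rule affine_zero[of "\<lambda>s. euler L x (u(?K:=s))" "euler L x u" "u ?K"]) (simp_all add: z)
    thus ?thesis using dl by simp
  qed
  have Z2: "LP2 Lam x (u (0,0,0), u (1,0,0), u (0,1,0), u (0,0,1)) = 0" for u :: jet
  proof -
    let ?K = "(1,0,3) :: nat \<times> nat \<times> nat"
    have memb: "?K \<notin> SL" "?K \<notin> shS 2 SL" "?K \<notin> shS 1 SL" "?K \<notin> shS 0 (shS 0 S0)"
      "?K \<notin> shS 2 (shS 2 S0)" "?K \<notin> shS 1 (shS 2 S0)" "(1,0,2) \<notin> shS 2 S0" "(1,0,1) \<notin> S0"
      by (simp_all add: SL_def S0_def shS_def shift_conc)
    have sh: "shift 0 (0,0,3) = ?K" "shift 2 (1,0,2) = ?K" "shift 2 (1,0,1) = (1,0,2)" "shift 2 (1,0,0) = (1,0,1)" by (simp_all add: shift_conc)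
    note e1 = C000[OF memb(1)] C001[OF memb(2)] C010[OF memb(3)] C200[OF memb(4)] C002[OF memb(5)] C011[OF memb(6)]
      A100[OF memb(1) sh(1)] A003[OF memb(5) sh(2)]
    note e2 = P2[OF memb(7) sh(3)] P1[OF memb(8) sh(4)]
    have "euler L x (u(?K:=s)) = euler L x u + (s - u ?K) * (- (LP2 Lam x (u (0,0,0), u (1,0,0), u (0,1,0), u (0,0,1)) * dl) - LP2 Lam x (u (0,0,0), u (1,0,0), u (0,1,0), u (0,0,1)) * dl)" for s
      unfolding E8 e1 e2 s100 t2 by (simp add: algebra_simps)
    hence "- (LP2 Lam x (u (0,0,0), u (1,0,0), u (0,1,0), u (0,0,1)) * dl) - LP2 Lam x (u (0,0,0), u (1,0,0), u (0,1,0), u (0,0,1)) * dl = 0"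
      by (rule affine_zero[of "\<lambda>s. euler L x (u(?K:=s))" "euler L x u" "u ?K"]) (simp_all add: z)
    thus ?thesis using dl by simp
  qed
  have Z3: "LP3 Lam x (u (0,0,0), u (1,0,0), u (0,1,0), u (0,0,1)) = 0" for u :: jet
  proof -
    let ?K = "(0,1,3) :: nat \<times> nat \<times> nat"
    have memb: "?K \<notin> SL" "?K \<notin> shS 2 SL" "?K \<notin> shS 0 SL" "?K \<notin> shS 0 (shS 0 S0)"
      "?K \<notin> shS 2 (shS 2 S0)" "?K \<notin> shS 1 (shS 2 S0)" "(0,1,2) \<notin> shS 2 S0" "(0,1,1) \<notin> S0"
      by (simp_all add: SL_def S0_def shS_def shift_conc)
    have sh: "shift 1 (0,0,3) = ?K" "shift 2 (0,1,2) = ?K" "shift 2 (0,1,1) = (0,1,2)" "shift 2 (0,1,0) = (0,1,1)" by (simp_all add: shift_conc)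
    note e1 = C000[OF memb(1)] C001[OF memb(2)] C100[OF memb(3)] C200[OF memb(4)] C002[OF memb(5)] C011[OF memb(6)]
      A010[OF memb(1) sh(1)] A003[OF memb(5) sh(2)]
    note e2 = P2[OF memb(7) sh(3)] P1[OF memb(8) sh(4)]
    have "euler L x (u(?K:=s)) = euler L x u + (s - u ?K) * (- (LP3 Lam x (u (0,0,0), u (1,0,0), u (0,1,0), u (0,0,1)) * dl) - LP3 Lam x (u (0,0,0), u (1,0,0), u (0,1,0), u (0,0,1)) * dl)" for s
      unfolding E8 e1 e2 s010 t3 by (simp add: algebra_simps)
    hence "- (LP3 Lam x (u (0,0,0), u (1,0,0), u (0,1,0), u (0,0,1)) * dl) - LP3 Lam x (u (0,0,0), u (1,0,0), u (0,1,0), u (0,0,1)) * dl = 0"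
      by (rule affine_zero[of "\<lambda>s. euler L x (u(?K:=s))" "euler L x u" "u ?K"]) (simp_all add: z)
    thus ?thesis using dl by simp
  qed
  obtain a b c d where w: "w = (a,b,c,d)" by (cases w) auto
  define u0 where "u0 = (\<lambda>_::nat\<times>nat\<times>nat. 0::real)((0,0,0):=a, (1,0,0):=b, (0,1,0):=c, (0,0,1):=d)"
  have "(u0 (0,0,0), u0 (1,0,0), u0 (0,1,0), u0 (0,0,1)) = w" by (simp add: u0_def w)
  thus ?thesis using Z2[of u0] Z3[of u0] Z4[of u0] by simp
qed

lemma Lam_reduce:
  fixes Lam :: lamt
  assumes cL: "Cinf_on {y. fst (fst y) > 0} Lam" and x: "fst x > 0"
    and Z: "\<And>w. LP2 Lam x w = 0 \<and> LP3 Lam x w = 0 \<and> LP4 Lam x w = 0"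
  shows "Lam (x,(a,b,c,d)) = Lam (x,(a,0,0,0))"
proof -
  note DL = Lam_derivs[OF cL x]
  have "Lam (x,(a,b,c,d)) = Lam (x,(a,b,c,0))"
    using DERIV_isconst_all[of "\<lambda>s. Lam (x,(a,b,c,s))" d 0] DL(4) Z by metis
  also have "\<dots> = Lam (x,(a,b,0,0))"
    using DERIV_isconst_all[of "\<lambda>s. Lam (x,(a,b,s,0))" c 0] DL(3) Z by metis
  also have "\<dots> = Lam (x,(a,0,0,0))"
    using DERIV_isconst_all[of "\<lambda>s. Lam (x,(a,s,0,0))" b 0] DL(2) Z by metis
  finally show ?thesis .
qed

lemma step3:
  fixes Lam :: lamt
  assumes c0: "c0 > 0" and dF: "\<And>x. F differentiable (at x)" and dF1: "\<And>x. deriv F differentiable (at x)"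
    and dF2: "\<And>x. deriv (deriv F) differentiable (at x)"
    and cL: "Cinf_on {y. fst (fst y) > 0} Lam"
    and mult: "\<forall>x u. fst x > 0 \<longrightarrow> euler (\<lambda>y v. Lam (y, (v (0,0,0), v (1,0,0), v (0,1,0), v (0,0,1))) * Eexp c0 dl bt m F y v) x u = 0"
    and red: "\<And>x a b c d. fst x > 0 \<Longrightarrow> Lam (x,(a,b,c,d)) = Lam (x,(a,0,0,0))"
    and x: "fst x > 0"
  shows "LP1 Lam x (p,0,0,0) = 0"
proof -
  define F1 where "F1 = deriv F"
  define F2 where "F2 = deriv F1"
  define F3 where "F3 = deriv F2"
  have DF1: "\<And>x. (F1 has_real_derivative F2 x) (at x)" unfolding F2_def F1_def using has_deriv_of_diff[OF dF1] .
  have DF2: "\<And>x. (F2 has_real_derivative F3 x) (at x)" unfolding F3_def F2_def F1_def using has_deriv_of_diff[OF dF2] .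
  note DL = Lam_derivs[OF cL x]
  define L where "L = (\<lambda>y v. Lam (y, (v (0,0,0), v (1,0,0), v (0,1,0), v (0,0,1))) * Eexp c0 dl bt m F y v)"
  define L' where "L' = (\<lambda>y v. Lam (y, (v (0,0,0), 0, 0, 0)) * Eexp c0 dl bt m F y v)"
  define SL :: "(nat \<times> nat \<times> nat) set" where "SL = {(0,0,0),(1,0,0),(0,1,0),(0,0,1),(2,0,0),(0,0,2),(0,0,3),(0,1,1)}"
  define S0 :: "(nat \<times> nat \<times> nat) set" where "S0 = {(0,0,0)}"
  have fSL: "finite SL" and fS0: "finite S0" by (simp_all add: SL_def S0_def)
  have dL: "dep SL L" by (simp add: dep_def L_def Eexp_def SL_def)
  have dL': "dep {(0,0,0),(1,0,0),(0,1,0),(0,0,1),(2,0,0),(0,0,2),(0,0,3),(0,1,1)} L'"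
    by (simp add: dep_def L'_def Eexp_def)
  have dL'': "dep {(0,0,0),(1,0,0),(0,0,1),(2,0,0),(0,0,2),(0,0,3),(0,1,1)} L'"
    by (simp add: dep_def L'_def Eexp_def)
  have ag: "agree L L'" unfolding agree_def L_def L'_def
  proof (intro allI impI)
    fix y :: pt and v :: jet assume "fst y > 0"
    thus "Lam (y, v (0,0,0), v (1,0,0), v (0,1,0), v (0,0,1)) * Eexp c0 dl bt m F y v =
          Lam (y, v (0,0,0), 0, 0, 0) * Eexp c0 dl bt m F y v" using red[of y] by metis
  qed
  have z: "euler L' x v = 0" for v
  proof -
    have "agree (euler L) (euler L')" by (rule euler_local[OF fSL dL _ ag]) (use dL' in \<open>simp add: SL_def\<close>)
    hence "euler L' x v = euler L x v" using x unfolding agree_def by metis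
    also have "\<dots> = 0" using mult x unfolding L_def by blast
    finally show ?thesis .
  qed
  have EF: "Eexp c0 dl bt m F = (\<lambda>x u. c0 ^ 4 * (u (2,0,0) + u (1,0,0) * (2 * m / fst x)) + dl * u (0,0,3)
     + bt * (F2 (u (0,0,0)) * (u (0,0,1))\<^sup>2 + F1 (u (0,0,0)) * u (0,0,2))
     - 2 * c0 ^ 3 * u (0,1,1))" by (intro ext) (simp add: Eexp_def F1_def F2_def ac_simps)
  define N3 where "N3 = (\<lambda>x (u::jet). Lam (x, (u (0,0,0), 0, 0, 0)) * dl)"
  define N200 where "N200 = (\<lambda>x (u::jet). Lam (x, (u (0,0,0), 0, 0, 0)) * c0 ^ 4)"
  define N002 where "N002 = (\<lambda>x (u::jet). Lam (x, (u (0,0,0), 0, 0, 0)) * (bt * F1 (u (0,0,0))))"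
  define N011 where "N011 = (\<lambda>x (u::jet). Lam (x, (u (0,0,0), 0, 0, 0)) * (- 2 * c0 ^ 3))"
  define N100 where "N100 = (\<lambda>x (u::jet). Lam (x, (u (0,0,0), 0, 0, 0)) * (c0 ^ 4 * (2 * m / fst x)))"
  define N001 where "N001 = (\<lambda>x (u::jet). Lam (x, (u (0,0,0), 0, 0, 0)) * (bt * (F2 (u (0,0,0)) * (2 * u (0,0,1)))))"
  have PN: "pu (0,0,3) L' = N3" "pu (2,0,0) L' = N200" "pu (0,0,2) L' = N002" "pu (0,1,1) L' = N011"
     "pu (1,0,0) L' = N100" "pu (0,0,1) L' = N001"
  proof -
    show "pu (0,0,3) L' = N3"
      unfolding pu_def L'_def EF N3_def
      apply (intro ext)
      apply (simp add: fun_upd_apply)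
      apply (rule DERIV_imp_deriv)
      apply (rule derivative_eq_intros | simp)+
      done
    show "pu (2,0,0) L' = N200"
      unfolding pu_def L'_def EF N200_def
      apply (intro ext)
      apply (simp add: fun_upd_apply)
      apply (rule DERIV_imp_deriv)
      apply (rule derivative_eq_intros | simp)+
      done
    show "pu (0,0,2) L' = N002"
      unfolding pu_def L'_def EF N002_def
      apply (intro ext)
      apply (simp add: fun_upd_apply)
      apply (rule DERIV_imp_deriv)
      apply (rule derivative_eq_intros | simp)+
      done
    show "pu (0,1,1) L' = N011"
      unfolding pu_def L'_def EF N011_def
      apply (intro ext)
      apply (simp add: fun_upd_apply)
      apply (rule DERIV_imp_deriv)
      apply (rule derivative_eq_intros | simp)+
      done
    show "pu (1,0,0) L' = N100"
      unfolding pu_def L'_def EF N100_def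
      apply (intro ext)
      apply (simp add: fun_upd_apply del: times_divide_eq_right)
      apply (rule DERIV_imp_deriv)
      apply (rule derivative_eq_intros | simp del: times_divide_eq_right)+
      apply (simp add: ac_simps)
      done
    show "pu (0,0,1) L' = N001"
      unfolding pu_def L'_def EF N001_def
      apply (intro ext)
      apply (simp add: fun_upd_apply)
      apply (rule DERIV_imp_deriv)
      apply (rule derivative_eq_intros | simp)+
      done
  qed
  have P010: "pu (0,1,0) L' = (\<lambda>x u. 0)"
    by (intro ext) (rule pu_zero_dep[OF dL'']; simp)
  have dN: "dep S0 N3" "dep S0 N200" "dep S0 N002" "dep S0 N011" "dep S0 N100" "dep {(0,0,0),(0,0,1)} N001"
    by (simp_all add: dep_def S0_def N3_def N200_def N002_def N011_def N100_def N001_def)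
  have N000: "pu (0,0,0) L' x v = LP1 Lam x (v (0,0,0), 0, 0, 0) * Eexp c0 dl bt m F x v
      + Lam (x, (v (0,0,0), 0, 0, 0)) * (bt * (F3 (v (0,0,0)) * (v (0,0,1))\<^sup>2 + F2 (v (0,0,0)) * v (0,0,2)))" for v
    unfolding pu_def L'_def EF
    apply (simp add: fun_upd_apply)
    apply (rule DERIV_imp_deriv)
    apply (rule derivative_eq_intros DL DF1 DF2 | simp)+
    done
  have E8: "euler L' x v = pu (0,0,0) L' x v - Dtot 0 N100 x v - 0
     - Dtot 2 N001 x v
     + Dtot 0 (Dtot 0 N200) x v + Dtot 2 (Dtot 2 N002) x v
     - Dtot 2 (Dtot 2 (Dtot 2 N3)) x v + Dtot 1 (Dtot 2 N011) x v" for v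
    using euler_expand8[OF dL', of x v] by (simp add: PN P010 Dtot_zero)
  let ?K = "(2,0,0) :: nat \<times> nat \<times> nat"
  have fS1: "finite (shS 0 S0)" by (rule finite_shS[OF fS0])
  have d200: "dep (shS 0 S0) (Dtot 0 N200)" by (rule dep_Dtot[OF fS0 dN(2)])
  have memb: "?K \<notin> shS 0 S0" "?K \<notin> shS 2 {(0,0,0),(0,0,1)}" "?K \<notin> shS 2 (shS 2 S0)"
      "?K \<notin> shS 2 (shS 2 (shS 2 S0))" "?K \<notin> shS 1 (shS 2 S0)" "(1,0,0) \<notin> S0"
    by (simp_all add: S0_def shS_def shift_conc)
  have e1: "Dtot 0 N100 x (u(?K:=s)) = Dtot 0 N100 x u" for u :: jet and s
    by (rule dep_upd[OF dep_Dtot[OF fS0 dN(5)] memb(1)])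
  have e2: "Dtot 2 N001 x (u(?K:=s)) = Dtot 2 N001 x u" for u :: jet and s
    by (rule dep_upd[OF dep_Dtot[OF _ dN(6)] memb(2)]) simp
  have e3: "Dtot 2 (Dtot 2 N002) x (u(?K:=s)) = Dtot 2 (Dtot 2 N002) x u" for u :: jet and s
    by (rule dep_upd[OF dep_Dtot[OF finite_shS[OF fS0] dep_Dtot[OF fS0 dN(3)]] memb(3)])
  have e4: "Dtot 2 (Dtot 2 (Dtot 2 N3)) x (u(?K:=s)) = Dtot 2 (Dtot 2 (Dtot 2 N3)) x u" for u :: jet and s
    by (rule dep_upd[OF dep_Dtot[OF finite_shS[OF finite_shS[OF fS0]] dep_Dtot[OF finite_shS[OF fS0] dep_Dtot[OF fS0 dN(1)]]] memb(4)])
  have e5: "Dtot 1 (Dtot 2 N011) x (u(?K:=s)) = Dtot 1 (Dtot 2 N011) x u" for u :: jet and s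
    by (rule dep_upd[OF dep_Dtot[OF finite_shS[OF fS0] dep_Dtot[OF fS0 dN(4)]] memb(5)])
  have e6: "Dtot 0 (Dtot 0 N200) x (u(?K:=s)) = Dtot 0 (Dtot 0 N200) x u + (s - u ?K) * pu (1,0,0) (Dtot 0 N200) x u" for u :: jet and s
    by (rule Dtot_affine[OF fS1 d200 memb(1)]) (simp add: shift_conc)
  have e7: "pu (1,0,0) (Dtot 0 N200) x u = pu (0,0,0) N200 x u" for u :: jet
    by (rule pu_Dtot[OF fS0 dN(2) memb(6)]) (simp add: shift_conc)
  have e8: "pu (0,0,0) N200 x u = LP1 Lam x (u (0,0,0), 0, 0, 0) * c0 ^ 4" for u :: jet
    unfolding pu_def N200_def
    apply (simp add: fun_upd_apply)
    apply (rule DERIV_imp_deriv)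
    apply (rule derivative_eq_intros DL | simp)+
    done
  have e9: "pu (0,0,0) L' x (u(?K:=s)) = pu (0,0,0) L' x u + (s - u ?K) * (LP1 Lam x (u (0,0,0), 0, 0, 0) * c0 ^ 4)" for u :: jet and s
    unfolding N000 EF by (simp add: fun_upd_apply algebra_simps)
  have "euler L' x (u(?K:=s)) = euler L' x u + (s - u ?K) * (LP1 Lam x (u (0,0,0), 0, 0, 0) * c0 ^ 4 + LP1 Lam x (u (0,0,0), 0, 0, 0) * c0 ^ 4)" for s and u :: jet
    unfolding E8 e1 e2 e3 e4 e5 e6 e7 e8 e9 by (simp add: algebra_simps)
  hence "LP1 Lam x (u (0,0,0), 0, 0, 0) * c0 ^ 4 + LP1 Lam x (u (0,0,0), 0, 0, 0) * c0 ^ 4 = 0" for u :: jet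
    by (rule affine_zero[of "\<lambda>s. euler L' x (u(?K:=s))" "euler L' x u" "u ?K"]) (simp_all add: z)
  from this[of "\<lambda>_. p"] show ?thesis using c0 by simp
qed


declare One_nat_def[simp del]

lemma multiplier_only_if:
  fixes Lam :: lamt
  assumes c0: "c0 > 0" and dl: "dl > 0" and bt: "bt > 0"
    and dF: "\<And>x. F differentiable (at x)" and dF1: "\<And>x. deriv F differentiable (at x)"
    and dF2: "\<And>x. deriv (deriv F) differentiable (at x)"
    and F2nz: "\<forall>q. deriv (deriv F) q \<noteq> 0"
    and cL: "Cinf_on {y. fst (fst y) > 0} Lam"
    and mult: "is_multiplier c0 dl bt m F Lam"
  shows "\<exists>\<phi> \<psi> :: real \<times> real \<Rightarrow> real.
            Cinf_on {w. fst w > 0} \<phi> \<and> Cinf_on {w. fst w > 0} \<psi> \<and>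
            (\<forall>r z t w. r > 0 \<longrightarrow> Lam ((r, z, t), w) = \<phi> (r, z) + t * \<psi> (r, z)) \<and>
            (\<forall>r z. r > 0 \<longrightarrow>
               d2_r (d2_r \<phi>) (r, z) - 2 * m / r * d2_r \<phi> (r, z) + 2 * m / r ^ 2 * \<phi> (r, z)
                 = 2 / c0 * d2_z \<psi> (r, z)) \<and>
            (\<forall>r z. r > 0 \<longrightarrow>
               d2_r (d2_r \<psi>) (r, z) - 2 * m / r * d2_r \<psi> (r, z) + 2 * m / r ^ 2 * \<psi> (r, z)
                 = 0)"
proof -
  have kz: "kzkE c0 dl bt m F = Eexp c0 dl bt m F" by (rule kzkE_eq[OF dF dF1])
  have mult': "\<forall>x u. fst x > 0 \<longrightarrow> euler (\<lambda>y v. Lam (y, (v (0,0,0), v (1,0,0), v (0,1,0), v (0,0,1))) * Eexp c0 dl bt m F y v) x u = 0"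
    using mult unfolding is_multiplier_def kz .
  have Z: "\<And>x w. fst x > 0 \<Longrightarrow> LP2 Lam x w = 0 \<and> LP3 Lam x w = 0 \<and> LP4 Lam x w = 0"
    by (rule step1[OF dl dF dF1 dF2 cL mult'])
  have red: "\<And>x a b c d. fst x > 0 \<Longrightarrow> Lam (x,(a,b,c,d)) = Lam (x,(a,0,0,0))"
    by (rule Lam_reduce[OF cL _ Z])
  have Z1: "\<And>x p. fst x > 0 \<Longrightarrow> LP1 Lam x (p,0,0,0) = 0"
    by (rule step3[OF c0 dF dF1 dF2 cL mult' red])
  have red2: "Lam (x,(p,0,0,0)) = Lam (x,(0,0,0,0))" if "fst x > 0" for x p
    using DERIV_isconst_all[of "\<lambda>s. Lam (x,(s,0,0,0))" p 0] Lam_derivs(1)[OF cL that] Z1[OF that] by metis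
  define lam where "lam = (\<lambda>y::pt. Lam (y, 0))"
  have lam0: "Lam (y,(0,0,0,0)) = lam y" for y by (simp add: lam_def zero_prod_def)
  have clam: "Cinf_on Upos lam"
  proof -
    have "Cinf_on {y. 0 + (y, 0) \<in> {y. fst (fst y) > 0}} (\<lambda>y::pt. Lam (0 + (y, 0)))"
      apply (rule Cinf_pullback[where T="\<lambda>y::pt. (y, 0::real\<times>real\<times>real\<times>real)" and c=0, OF _ _ _ cL])
      apply simp
      apply (intro continuous_intros)
      apply (simp add: Basis_prod_def)
      apply simp
      done
    thus ?thesis by (simp add: lam_def)
  qed
  have red3: "Lam ((r,z,t),w) = lam (r,z,t)" if "r > 0" for r z t w
  proof -
    obtain a b c d where w: "w = (a,b,c,d)" by (cases w) auto
    show ?thesis using red[of "(r,z,t)" a b c d] red2[of "(r,z,t)" a] that by (simp add: w lam0)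
  qed
  have hr: "r > 0 \<Longrightarrow> (\<lambda>s. lam (s,z,t)) differentiable (at r)" for r z t
    using Cinf_diff_r[OF clam, of "[]"] by simp
  have hrr: "r > 0 \<Longrightarrow> (\<lambda>s. d_r lam (s,z,t)) differentiable (at r)" for r z t
    using Cinf_diff_r[OF clam, of "[er]"] basis_pt by (simp add: pdir_er)
  have ht: "r > 0 \<Longrightarrow> (\<lambda>s. lam (r,z,s)) differentiable (at t)" for r z t
    using Cinf_diff_t[OF clam, of "[]"] by simp
  have htt: "r > 0 \<Longrightarrow> (\<lambda>s. d_t lam (r,z,s)) differentiable (at t)" for r z t
    using Cinf_diff_t[OF clam, of "[et]"] basis_pt by (simp add: pdir_et)
  have httt: "r > 0 \<Longrightarrow> (\<lambda>s. d_t (d_t lam) (r,z,s)) differentiable (at t)" for r z t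
    using Cinf_diff_t[OF clam, of "[et,et]"] basis_pt by (simp add: pdir_et)
  have hzt: "r > 0 \<Longrightarrow> (\<lambda>s. d_t lam (r,s,t)) differentiable (at z)" for r z t
    using Cinf_diff_z[OF clam, of "[et]"] basis_pt by (simp add: pdir_et)
  define L where "L = (\<lambda>y v. Lam (y, (v (0,0,0), v (1,0,0), v (0,1,0), v (0,0,1))) * Eexp c0 dl bt m F y v)"
  define L2 where "L2 = (\<lambda>x u. lam x * Eexp c0 dl bt m F x u)"
  define SL :: "(nat \<times> nat \<times> nat) set" where "SL = {(0,0,0),(1,0,0),(0,1,0),(0,0,1),(2,0,0),(0,0,2),(0,0,3),(0,1,1)}"
  have dL: "dep SL L" by (simp add: dep_def SL_def L_def Eexp_def)
  have dL2: "dep SL L2" by (simp add: dep_def SL_def L2_def Eexp_def)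
  have ag: "agree L L2" unfolding agree_def L_def L2_def
  proof (intro allI impI)
    fix x :: pt and u :: jet assume "fst x > 0"
    then obtain r z t where x: "x = (r,z,t)" "r > 0" by (cases x) auto
    show "Lam (x, u (0,0,0), u (1,0,0), u (0,1,0), u (0,0,1)) * Eexp c0 dl bt m F x u = lam x * Eexp c0 dl bt m F x u"
      using red3[OF x(2)] by (simp add: x(1))
  qed
  have agE: "agree (euler L) (euler L2)" by (rule euler_local[OF _ dL dL2 ag]) (simp add: SL_def)
  have form: "c0 ^ 4 * (d_r (d_r lam) (r,z,t) - 2 * m * d_r lam (r,z,t) / r + 2 * m * lam (r,z,t) / r ^ 2)
     - dl * d_t (d_t (d_t lam)) (r,z,t) + bt * deriv F (u (0,0,0)) * d_t (d_t lam) (r,z,t)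
     - 2 * c0 ^ 3 * d_z (d_t lam) (r,z,t) = 0" if r: "r > 0" for r z t and u :: jet
  proof -
    have "euler L2 (r,z,t) u = euler L (r,z,t) u" using agreeD[OF agE r] by simp
    also have "\<dots> = 0" using mult'[rule_format, of "(r,z,t)" u] r unfolding L_def by simp
    finally have "euler L2 (r,z,t) u = 0" .
    moreover have "euler L2 (r,z,t) u = c0 ^ 4 * (d_r (d_r lam) (r,z,t) - 2 * m * d_r lam (r,z,t) / r + 2 * m * lam (r,z,t) / r ^ 2)
     - dl * d_t (d_t (d_t lam)) (r,z,t) + bt * deriv F (u (0,0,0)) * d_t (d_t lam) (r,z,t)
     - 2 * c0 ^ 3 * d_z (d_t lam) (r,z,t)"
      unfolding L2_def by (rule euler_lamE[OF dF dF1 dF2 hr hrr ht htt httt hzt r])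
    ultimately show ?thesis by simp
  qed
  have F1ne: "deriv F 0 \<noteq> deriv F 1"
  proof
    assume eq: "deriv F 0 = deriv F 1"
    obtain zz where "deriv F 1 - deriv F 0 = (1 - 0) * deriv (deriv F) zz"
      using MVT2[of 0 1 "deriv F" "deriv (deriv F)"] has_deriv_of_diff[OF dF1] by force
    thus False using eq F2nz by simp
  qed
  have ltt: "d_t (d_t lam) (r,z,t) = 0" if r: "r > 0" for r z t
  proof -
    have a: "\<And>u::jet. bt * deriv F (u (0,0,0)) * d_t (d_t lam) (r,z,t) = - (c0 ^ 4 * (d_r (d_r lam) (r,z,t) - 2 * m * d_r lam (r,z,t) / r + 2 * m * lam (r,z,t) / r ^ 2)
     - dl * d_t (d_t (d_t lam)) (r,z,t) - 2 * c0 ^ 3 * d_z (d_t lam) (r,z,t))"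
      using form[OF r] by (simp add: algebra_simps)
    have "bt * deriv F 0 * d_t (d_t lam) (r,z,t) = bt * deriv F 1 * d_t (d_t lam) (r,z,t)"
      using a[of "\<lambda>_. 0"] a[of "\<lambda>_. 1"] by simp
    thus ?thesis using bt F1ne by simp
  qed
  have lttt: "d_t (d_t (d_t lam)) (r,z,t) = 0" if r: "r > 0" for r z t
    using ltt[OF r] by (simp add: d_t_def[of "d_t (d_t lam)"])
  have Dt: "((\<lambda>s. lam (r,z,s)) has_real_derivative d_t lam (r,z,t)) (at t)" if "r > 0" for r z t
    using has_deriv_of_diff[OF ht[OF that]] by (simp add: d_t_def)
  have Dtt: "((\<lambda>s. d_t lam (r,z,s)) has_real_derivative 0) (at t)" if "r > 0" for r z t
    using has_deriv_of_diff[OF htt[OF that]] ltt[OF that] by (simp add: d_t_def[of "d_t lam"])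
  have ltc: "d_t lam (r,z,t) = d_t lam (r,z,0)" if "r > 0" for r z t
    using DERIV_isconst_all[of "\<lambda>s. d_t lam (r,z,s)" t 0] Dtt[OF that] by blast
  have laff: "lam (r,z,t) = lam (r,z,0) + t * d_t lam (r,z,0)" if "r > 0" for r z t
  proof -
    have "\<forall>s. ((\<lambda>s. lam (r,z,s) - s * d_t lam (r,z,0)) has_real_derivative 0) (at s)"
    proof
      fix s
      show "((\<lambda>s. lam (r,z,s) - s * d_t lam (r,z,0)) has_real_derivative 0) (at s)"
        using Dt[OF that, of z s] ltc[OF that, of z s]
        by (auto intro!: derivative_eq_intros)
    qed
    from DERIV_isconst_all[OF this, of t 0] show ?thesis by simp
  qed
  define \<phi> where "\<phi> = (\<lambda>w::real\<times>real. lam (fst w, snd w, 0))"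
  define \<psi> where "\<psi> = (\<lambda>w::real\<times>real. d_t lam (fst w, snd w, 0))"
  have pull: "Cinf_on {w::real\<times>real. fst w > 0} (\<lambda>w. g (fst w, snd w, 0))" if cg: "Cinf_on Upos g" for g
  proof -
    have "Cinf_on {w. 0 + (fst w, snd w, 0::real) \<in> Upos} (\<lambda>w::real\<times>real. g (0 + (fst w, snd w, 0)))"
      apply (rule Cinf_pullback[where T="\<lambda>w::real\<times>real. (fst w, snd w, 0::real)" and c=0, OF _ _ _ cg])
      apply simp
      apply (intro continuous_intros)
      apply (auto simp: Basis_prod_def zero_prod_def)
      done
    thus ?thesis by simp
  qed
  have cphi: "Cinf_on {w. fst w > 0} \<phi>" unfolding \<phi>_def by (rule pull[OF clam])
  have cpsi: "Cinf_on {w. fst w > 0} \<psi>"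
  proof -
    have "Cinf_on Upos (iterpd [et] lam)" by (rule Cinf_iterpd[OF clam]) (simp add: basis_pt)
    hence "Cinf_on Upos (d_t lam)" by (simp add: pdir_et)
    thus ?thesis unfolding \<psi>_def by (rule pull)
  qed
  have lamrep: "lam (r,z,t) = \<phi> (r,z) + t * \<psi> (r,z)" if "r > 0" for r z t
    unfolding \<phi>_def \<psi>_def fst_conv snd_conv by (rule laff[OF that])
  have phr: "r > 0 \<Longrightarrow> (\<lambda>s. \<phi> (s,z)) differentiable (at r)" for r z using Cinf2_diff_r[OF cphi, of "[]"] by simp
  have psr: "r > 0 \<Longrightarrow> (\<lambda>s. \<psi> (s,z)) differentiable (at r)" for r z using Cinf2_diff_r[OF cpsi, of "[]"] by simp
  have phrr: "r > 0 \<Longrightarrow> (\<lambda>s. d2_r \<phi> (s,z)) differentiable (at r)" for r z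
    using Cinf2_diff_r[OF cphi, of "[e1]"] basis_2 by (simp add: pdir_e1)
  have psrr: "r > 0 \<Longrightarrow> (\<lambda>s. d2_r \<psi> (s,z)) differentiable (at r)" for r z
    using Cinf2_diff_r[OF cpsi, of "[e1]"] basis_2 by (simp add: pdir_e1)
  have Dphr: "r > 0 \<Longrightarrow> ((\<lambda>s. \<phi> (s,z)) has_real_derivative d2_r \<phi> (r,z)) (at r)" for r z
    using has_deriv_of_diff[OF phr] by (simp add: d2_r_def)
  have Dpsr: "r > 0 \<Longrightarrow> ((\<lambda>s. \<psi> (s,z)) has_real_derivative d2_r \<psi> (r,z)) (at r)" for r z
    using has_deriv_of_diff[OF psr] by (simp add: d2_r_def)
  have Dphrr: "r > 0 \<Longrightarrow> ((\<lambda>s. d2_r \<phi> (s,z)) has_real_derivative d2_r (d2_r \<phi>) (r,z)) (at r)" for r z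
    using has_deriv_of_diff[OF phrr] by (simp add: d2_r_def[of "d2_r \<phi>"])
  have Dpsrr: "r > 0 \<Longrightarrow> ((\<lambda>s. d2_r \<psi> (s,z)) has_real_derivative d2_r (d2_r \<psi>) (r,z)) (at r)" for r z
    using has_deriv_of_diff[OF psrr] by (simp add: d2_r_def[of "d2_r \<psi>"])
  have lr: "d_r lam (r,z,t) = d2_r \<phi> (r,z) + t * d2_r \<psi> (r,z)" if "r > 0" for r z t
  proof -
    have "d_r lam (r,z,t) = deriv (\<lambda>s. lam (s,z,t)) r" by (simp add: d_r_def)
    also have "\<dots> = deriv (\<lambda>s. \<phi> (s,z) + t * \<psi> (s,z)) r"
      by (rule deriv_cong_ev[OF _ refl]) (use eventually_pos_nhds[OF that] lamrep in \<open>auto elim: eventually_mono\<close>)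
    also have "\<dots> = d2_r \<phi> (r,z) + t * d2_r \<psi> (r,z)"
      by (rule DERIV_imp_deriv) (rule derivative_eq_intros Dphr[OF that] Dpsr[OF that] refl | simp)+
    finally show ?thesis .
  qed
  have lrr: "d_r (d_r lam) (r,z,t) = d2_r (d2_r \<phi>) (r,z) + t * d2_r (d2_r \<psi>) (r,z)" if "r > 0" for r z t
  proof -
    have "d_r (d_r lam) (r,z,t) = deriv (\<lambda>s. d_r lam (s,z,t)) r" by (simp add: d_r_def[of "d_r lam"])
    also have "\<dots> = deriv (\<lambda>s. d2_r \<phi> (s,z) + t * d2_r \<psi> (s,z)) r"
      by (rule deriv_cong_ev[OF _ refl]) (use eventually_pos_nhds[OF that] lr in \<open>auto elim: eventually_mono\<close>)
    also have "\<dots> = d2_r (d2_r \<phi>) (r,z) + t * d2_r (d2_r \<psi>) (r,z)"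
      by (rule DERIV_imp_deriv) (rule derivative_eq_intros Dphrr[OF that] Dpsrr[OF that] refl | simp)+
    finally show ?thesis .
  qed
  have lzt: "d_z (d_t lam) (r,z,t) = d2_z \<psi> (r,z)" if "r > 0" for r z t
  proof -
    have "d_t lam (r,s,t) = \<psi> (r,s)" for s unfolding \<psi>_def fst_conv snd_conv by (rule ltc[OF that])
    hence "(\<lambda>s. d_t lam (r,s,t)) = (\<lambda>s. \<psi> (r,s))" by (rule ext)
    thus ?thesis by (simp add: d_z_def d2_z_def)
  qed
  have key: "c0 ^ 4 * ((d2_r (d2_r \<phi>) (r, z) - 2 * m / r * d2_r \<phi> (r, z) + 2 * m / r ^ 2 * \<phi> (r, z))
        + t * (d2_r (d2_r \<psi>) (r, z) - 2 * m / r * d2_r \<psi> (r, z) + 2 * m / r ^ 2 * \<psi> (r, z)))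
        - 2 * c0 ^ 3 * d2_z \<psi> (r,z) = 0" if r: "r > 0" for r z t
  proof -
    have "0 = c0 ^ 4 * (d_r (d_r lam) (r,z,t) - 2 * m * d_r lam (r,z,t) / r + 2 * m * lam (r,z,t) / r ^ 2)
     - dl * d_t (d_t (d_t lam)) (r,z,t) + bt * deriv F ((\<lambda>_. 0::real) (0,0,0)) * d_t (d_t lam) (r,z,t)
     - 2 * c0 ^ 3 * d_z (d_t lam) (r,z,t)" using form[OF r, of z t "\<lambda>_. 0"] by simp
    also have "\<dots> = c0 ^ 4 * ((d2_r (d2_r \<phi>) (r, z) - 2 * m / r * d2_r \<phi> (r, z) + 2 * m / r ^ 2 * \<phi> (r, z))
        + t * (d2_r (d2_r \<psi>) (r, z) - 2 * m / r * d2_r \<psi> (r, z) + 2 * m / r ^ 2 * \<psi> (r, z)))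
        - 2 * c0 ^ 3 * d2_z \<psi> (r,z)"
      using r by (simp add: lr lrr lamrep ltt lttt lzt) (simp add: field_simps; algebra)
    finally show ?thesis by simp
  qed
  have c0ne: "c0 \<noteq> 0" using c0 by simp
  have ode1: "d2_r (d2_r \<phi>) (r, z) - 2 * m / r * d2_r \<phi> (r, z) + 2 * m / r ^ 2 * \<phi> (r, z) = 2 / c0 * d2_z \<psi> (r, z)"
    if r: "r > 0" for r z
  proof -
    define A where "A = d2_r (d2_r \<phi>) (r, z) - 2 * m / r * d2_r \<phi> (r, z) + 2 * m / r ^ 2 * \<phi> (r, z)"
    define Zz where "Zz = d2_z \<psi> (r, z)"
    have "c0 ^ 4 * A - 2 * c0 ^ 3 * Zz = 0"
      using key[OF r, of z 0] unfolding A_def Zz_def by simp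
    hence "c0 ^ 3 * (c0 * A - 2 * Zz) = 0" by (simp add: algebra_simps power3_eq_cube power4_eq_xxxx)
    hence "c0 * A - 2 * Zz = 0" using c0ne by simp
    hence "A = 2 / c0 * Zz" using c0ne by (simp add: field_simps)
    thus ?thesis by (simp add: A_def Zz_def)
  qed
  have ode2: "d2_r (d2_r \<psi>) (r, z) - 2 * m / r * d2_r \<psi> (r, z) + 2 * m / r ^ 2 * \<psi> (r, z) = 0"
    if r: "r > 0" for r z
  proof -
    have "c0 ^ 4 * (d2_r (d2_r \<psi>) (r, z) - 2 * m / r * d2_r \<psi> (r, z) + 2 * m / r ^ 2 * \<psi> (r, z)) = 0"
      using key[OF r, of z 0] key[OF r, of z 1] by (simp add: algebra_simps)
    thus ?thesis using c0ne by simp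
  qed
  show ?thesis
    apply (rule exI[of _ \<phi>], rule exI[of _ \<psi>])
    using cphi cpsi ode1 ode2 red3 lamrep by simp
qed


declare One_nat_def[simp del]

lemma mvt_abs:
  fixes f f' :: "real \<Rightarrow> real"
  assumes d: "\<And>x. (f has_real_derivative f' x) (at x)"
  shows "\<exists>\<xi>. \<bar>\<xi> - a\<bar> \<le> \<bar>h\<bar> \<and> f (a + h) - f a = h * f' \<xi>"
proof (cases "h = 0")
  case True thus ?thesis by (intro exI[of _ a]) simp
next
  case False
  show ?thesis
  proof (cases "h > 0")
    case True
    obtain \<xi> where "a < \<xi>" "\<xi> < a + h" "f (a + h) - f a = (a + h - a) * f' \<xi>"
      using MVT2[of a "a + h" f f'] d True by auto
    thus ?thesis by (intro exI[of _ \<xi>]) auto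
  next
    case neg: False
    hence h: "h < 0" using False by simp
    obtain \<xi> where "a + h < \<xi>" "\<xi> < a" "f a - f (a + h) = (a - (a + h)) * f' \<xi>"
      using MVT2[of "a + h" a f f'] d h by auto
    thus ?thesis by (intro exI[of _ \<xi>]) (auto simp: algebra_simps)
  qed
qed

lemma dist_pt_le: "dist ((r::real), (a::real), (b::real)) (r, c, d) \<le> \<bar>a - c\<bar> + \<bar>b - d\<bar>"
proof -
  have "dist (r, a, b) (r, c, d) \<le> dist (r, a, b) (r, c, b) + dist (r, c, b) (r, c, d)" by (rule dist_triangle)
  also have "dist (r, a, b) (r, c, b) = \<bar>a - c\<bar>" by (simp add: dist_Pair_Pair dist_real_def)
  also have "dist (r, c, b) (r, c, d) = \<bar>b - d\<bar>" by (simp add: dist_Pair_Pair dist_real_def)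
  finally show ?thesis .
qed

lemma schwarz:
  fixes p :: "pt \<Rightarrow> real"
  assumes cp: "Cinf_on Upos p" and r: "r > 0"
  shows "d_z (d_t p) (r,z,t) = d_t (d_z p) (r,z,t)"
proof -
  define D where "D = d_t (d_z p)"
  have Pt: "\<And>z t. ((\<lambda>s. p (r,z,s)) has_real_derivative d_t p (r,z,t)) (at t)"
    using has_deriv_of_diff[OF Cinf_diff_t[OF cp _ r, of "[]"]] by (simp add: d_t_def)
  have Pz: "\<And>z t. ((\<lambda>s. p (r,s,t)) has_real_derivative d_z p (r,z,t)) (at z)"
    using has_deriv_of_diff[OF Cinf_diff_z[OF cp _ r, of "[]"]] by (simp add: d_z_def)
  have Pzt: "\<And>z t. ((\<lambda>s. d_z p (r,z,s)) has_real_derivative D (r,z,t)) (at t)"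
    using has_deriv_of_diff[OF Cinf_diff_t[OF cp _ r, of "[ez]"]] basis_pt
    by (simp add: pdir_ez D_def d_t_def[of "d_z p"])
  have contD: "isCont D (r,z,t)"
  proof -
    have "continuous_on Upos (iterpd [et, ez] p)" by (rule Cinf_cont[OF cp]) (simp add: basis_pt)
    hence "continuous_on Upos D" by (simp add: pdir_et pdir_ez D_def)
    moreover have "open Upos" by (simp add: open_Collect_less continuous_on_fst continuous_on_id)
    ultimately show ?thesis using r continuous_on_eq_continuous_at by fastforce
  qed
  have main: "((\<lambda>s. d_t p (r,s,t)) has_real_derivative D (r,z,t)) (at z)"
    unfolding DERIV_def LIM_eq
  proof (intro allI impI)
    fix e :: real assume e: "e > 0"
    obtain d where d: "d > 0" "\<And>y. dist y (r,z,t) < d \<Longrightarrow> dist (D y) (D (r,z,t)) < e / 2"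
      using contD e unfolding continuous_at_eps_delta by (metis half_gt_zero)
    show "\<exists>s>0. \<forall>h. h \<noteq> 0 \<and> norm (h - 0) < s \<longrightarrow> norm ((d_t p (r, z + h, t) - d_t p (r, z, t)) / h - D (r,z,t)) < e"
    proof (intro exI[of _ "d / 2"] conjI allI impI)
      show "d / 2 > 0" using d by simp
      fix h :: real assume h: "h \<noteq> 0 \<and> norm (h - 0) < d / 2"
      define Q where "Q = (\<lambda>k. ((p (r, z + h, t + k) - p (r, z + h, t)) / k - (p (r, z, t + k) - p (r, z, t)) / k) / h)"
      have lim: "(Q \<longlongrightarrow> (d_t p (r, z + h, t) - d_t p (r, z, t)) / h) (at 0)"
        unfolding Q_def
        using Pt[of "z + h" t] Pt[of z t] h unfolding DERIV_def
        by (intro tendsto_intros) auto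
      have bound: "\<bar>Q k - D (r,z,t)\<bar> \<le> e / 2" if k: "k \<noteq> 0" "\<bar>k\<bar> < d / 2" for k
      proof -
        have dG: "((\<lambda>s. p (r, s, t + k) - p (r, s, t)) has_real_derivative d_z p (r, x, t + k) - d_z p (r, x, t)) (at x)" for x
          by (intro DERIV_diff Pz)
        obtain \<xi> where xi: "\<bar>\<xi> - z\<bar> \<le> \<bar>h\<bar>"
          "(p (r, z + h, t + k) - p (r, z + h, t)) - (p (r, z, t + k) - p (r, z, t)) = h * (d_z p (r, \<xi>, t + k) - d_z p (r, \<xi>, t))"
          using mvt_abs[OF dG, of z h] by auto
        obtain \<eta> where eta: "\<bar>\<eta> - t\<bar> \<le> \<bar>k\<bar>" "d_z p (r, \<xi>, t + k) - d_z p (r, \<xi>, t) = k * D (r, \<xi>, \<eta>)"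
          using mvt_abs[OF Pzt, of t k] by auto
        have Dl: "(p (r, z + h, t + k) - p (r, z + h, t)) - (p (r, z, t + k) - p (r, z, t)) = (h * k) * D (r, \<xi>, \<eta>)"
          using xi(2) eta(2) by simp
        have "Q k = ((p (r, z + h, t + k) - p (r, z + h, t)) - (p (r, z, t + k) - p (r, z, t))) / (h * k)"
          unfolding Q_def using h k(1) by (simp add: field_simps)
        also have "\<dots> = D (r, \<xi>, \<eta>)" unfolding Dl using h k(1) by simp
        finally have "Q k = D (r, \<xi>, \<eta>)" .
        moreover have "dist (r, \<xi>, \<eta>) (r, z, t) < d"
          using dist_pt_le[of r \<xi> \<eta> z t] xi(1) eta(1) h k(2) by simp
        hence "dist (D (r, \<xi>, \<eta>)) (D (r,z,t)) < e / 2" by (rule d(2))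
        ultimately show ?thesis by (simp add: dist_real_def)
      qed
      have ev: "eventually (\<lambda>k. \<bar>Q k - D (r,z,t)\<bar> \<le> e / 2) (at (0::real))"
        unfolding eventually_at using d bound by (intro exI[of _ "d / 2"]) (auto simp: dist_real_def)
      have lim2: "((\<lambda>k. \<bar>Q k - D (r,z,t)\<bar>) \<longlongrightarrow> \<bar>(d_t p (r, z + h, t) - d_t p (r, z, t)) / h - D (r,z,t)\<bar>) (at 0)"
        by (intro tendsto_intros lim)
      have "\<bar>(d_t p (r, z + h, t) - d_t p (r, z, t)) / h - D (r,z,t)\<bar> \<le> e / 2"
        by (rule tendsto_upperbound[OF lim2 ev]) simp
      thus "norm ((d_t p (r, z + h, t) - d_t p (r, z, t)) / h - D (r,z,t)) < e" using e by simp
    qed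
  qed
  have "d_z (d_t p) (r,z,t) = deriv (\<lambda>s. d_t p (r,s,t)) z" by (simp add: d_z_def)
  also have "\<dots> = D (r,z,t)" by (rule DERIV_imp_deriv[OF main])
  finally show ?thesis by (simp add: D_def)
qed

lemma conservation:
  fixes \<phi> \<psi> :: "real \<times> real \<Rightarrow> real" and p :: "pt \<Rightarrow> real"
  assumes c0: "c0 > 0"
    and dF: "\<And>x. F differentiable (at x)" and dF1: "\<And>x. deriv F differentiable (at x)"
    and cphi: "Cinf_on {w. fst w > 0} \<phi>" and cpsi: "Cinf_on {w. fst w > 0} \<psi>"
    and ode1: "\<forall>r z. r > 0 \<longrightarrow>
          d2_r (d2_r \<phi>) (r, z) - 2 * m / r * d2_r \<phi> (r, z) + 2 * m / r ^ 2 * \<phi> (r, z)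
            = 2 / c0 * d2_z \<psi> (r, z)"
    and ode2: "\<forall>r z. r > 0 \<longrightarrow>
          d2_r (d2_r \<psi>) (r, z) - 2 * m / r * d2_r \<psi> (r, z) + 2 * m / r ^ 2 * \<psi> (r, z) = 0"
    and cp: "Cinf_on {x. fst x > 0} p"
    and pde: "\<forall>r z t. r > 0 \<longrightarrow>
          c0 ^ 4 * (d_r (d_r p) (r, z, t) + 2 * m * d_r p (r, z, t) / r)
          + dl * d_t (d_t (d_t p)) (r, z, t)
          + bt * d_t (d_t (\<lambda>x. F (p x))) (r, z, t)
          - 2 * c0 ^ 3 * d_z (d_t p) (r, z, t) = 0"
    and r: "r > 0"
  shows "d_t (\<lambda>(r, z, t). (\<phi> (r, z) + t * \<psi> (r, z)) *
                   (dl * d_t (d_t p) (r, z, t) + bt * deriv F (p (r, z, t)) * d_t p (r, z, t)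
                    - 2 * c0 ^ 3 * d_z p (r, z, t))
                 - \<psi> (r, z) * (dl * d_t p (r, z, t) + bt * F (p (r, z, t)))) (r,z,t)
     + d_r (\<lambda>(r, z, t). c0 ^ 4 * ((\<phi> (r, z) + t * \<psi> (r, z)) *
                   (d_r p (r, z, t) + 2 * m * p (r, z, t) / r)
                 - p (r, z, t) * (d2_r \<phi> (r, z) + t * d2_r \<psi> (r, z)))) (r,z,t)
     + d_z (\<lambda>(r, z, t). 2 * c0 ^ 3 * p (r, z, t) * \<psi> (r, z)) (r,z,t) = 0"
proof -
  define F1 where "F1 = deriv F"
  define F2 where "F2 = deriv F1"
  have DF: "\<And>x. (F has_real_derivative F1 x) (at x)" unfolding F1_def using has_deriv_of_diff[OF dF] .
  have DF1: "\<And>x. (F1 has_real_derivative F2 x) (at x)" unfolding F2_def F1_def using has_deriv_of_diff[OF dF1] .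
  have Pr: "((\<lambda>s. p (s,z,t)) has_real_derivative d_r p (r,z,t)) (at r)"
    using has_deriv_of_diff[OF Cinf_diff_r[OF cp _ r, of "[]"]] by (simp add: d_r_def)
  have Prr: "((\<lambda>s. d_r p (s,z,t)) has_real_derivative d_r (d_r p) (r,z,t)) (at r)"
    using has_deriv_of_diff[OF Cinf_diff_r[OF cp _ r, of "[er]"]] basis_pt by (simp add: pdir_er d_r_def[of "d_r p"])
  have Pt: "((\<lambda>s. p (r,z,s)) has_real_derivative d_t p (r,z,s0)) (at s0)" for s0
    using has_deriv_of_diff[OF Cinf_diff_t[OF cp _ r, of "[]"]] by (simp add: d_t_def)
  have Ptt: "((\<lambda>s. d_t p (r,z,s)) has_real_derivative d_t (d_t p) (r,z,t)) (at t)"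
    using has_deriv_of_diff[OF Cinf_diff_t[OF cp _ r, of "[et]"]] basis_pt by (simp add: pdir_et d_t_def[of "d_t p"])
  have Pttt: "((\<lambda>s. d_t (d_t p) (r,z,s)) has_real_derivative d_t (d_t (d_t p)) (r,z,t)) (at t)"
    using has_deriv_of_diff[OF Cinf_diff_t[OF cp _ r, of "[et,et]"]] basis_pt by (simp add: pdir_et d_t_def[of "d_t (d_t p)"])
  have Pzt: "((\<lambda>s. d_z p (r,z,s)) has_real_derivative d_t (d_z p) (r,z,t)) (at t)"
    using has_deriv_of_diff[OF Cinf_diff_t[OF cp _ r, of "[ez]"]] basis_pt by (simp add: pdir_ez d_t_def[of "d_z p"])
  have Pz: "((\<lambda>s. p (r,s,t)) has_real_derivative d_z p (r,z,t)) (at z)"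
    using has_deriv_of_diff[OF Cinf_diff_z[OF cp _ r, of "[]"]] by (simp add: d_z_def)
  have Dphr: "((\<lambda>s. \<phi> (s,z)) has_real_derivative d2_r \<phi> (r,z)) (at r)"
    using has_deriv_of_diff[OF Cinf2_diff_r[OF cphi _ r, of "[]"]] by (simp add: d2_r_def)
  have Dpsr: "((\<lambda>s. \<psi> (s,z)) has_real_derivative d2_r \<psi> (r,z)) (at r)"
    using has_deriv_of_diff[OF Cinf2_diff_r[OF cpsi _ r, of "[]"]] by (simp add: d2_r_def)
  have Dphrr: "((\<lambda>s. d2_r \<phi> (s,z)) has_real_derivative d2_r (d2_r \<phi>) (r,z)) (at r)"
    using has_deriv_of_diff[OF Cinf2_diff_r[OF cphi _ r, of "[e1]"]] basis_2 by (simp add: pdir_e1 d2_r_def[of "d2_r \<phi>"])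
  have Dpsrr: "((\<lambda>s. d2_r \<psi> (s,z)) has_real_derivative d2_r (d2_r \<psi>) (r,z)) (at r)"
    using has_deriv_of_diff[OF Cinf2_diff_r[OF cpsi _ r, of "[e1]"]] basis_2 by (simp add: pdir_e1 d2_r_def[of "d2_r \<psi>"])
  have Dpsz: "((\<lambda>s. \<psi> (r,s)) has_real_derivative d2_z \<psi> (r,z)) (at z)"
    using has_deriv_of_diff[OF Cinf2_diff_z[OF cpsi _ r, of "[]"]] by (simp add: d2_z_def)
  have CF: "((\<lambda>s. F (p (r,z,s))) has_real_derivative F1 (p (r,z,s0)) * d_t p (r,z,s0)) (at s0)" for s0
    by (rule DERIV_chain2[OF DF Pt])
  have CF1: "((\<lambda>s. F1 (p (r,z,s))) has_real_derivative F2 (p (r,z,s0)) * d_t p (r,z,s0)) (at s0)" for s0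
    by (rule DERIV_chain2[OF DF1 Pt])
  have Ftt: "d_t (d_t (\<lambda>x. F (p x))) (r, z, t) = F2 (p (r,z,t)) * d_t p (r,z,t) * d_t p (r,z,t) + F1 (p (r,z,t)) * d_t (d_t p) (r,z,t)"
  proof -
    have a: "d_t (\<lambda>x. F (p x)) (r,z,s) = F1 (p (r,z,s)) * d_t p (r,z,s)" for s
      by (simp add: d_t_def[of "\<lambda>x. F (p x)"] DERIV_imp_deriv[OF CF])
    have "d_t (d_t (\<lambda>x. F (p x))) (r, z, t) = deriv (\<lambda>s. F1 (p (r,z,s)) * d_t p (r,z,s)) t"
      by (simp add: d_t_def[of "d_t (\<lambda>x. F (p x))"] a)
    also have "\<dots> = F2 (p (r,z,t)) * d_t p (r,z,t) * d_t p (r,z,t) + F1 (p (r,z,t)) * d_t (d_t p) (r,z,t)"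
      by (rule DERIV_imp_deriv) (rule derivative_eq_intros CF1 Ptt refl | simp)+
    finally show ?thesis .
  qed
  have sw: "d_z (d_t p) (r,z,t) = d_t (d_z p) (r,z,t)" by (rule schwarz[OF cp r])
  define Gt where "Gt = (\<lambda>(r, z, t). (\<phi> (r, z) + t * \<psi> (r, z)) *
                   (dl * d_t (d_t p) (r, z, t) + bt * deriv F (p (r, z, t)) * d_t p (r, z, t)
                    - 2 * c0 ^ 3 * d_z p (r, z, t))
                 - \<psi> (r, z) * (dl * d_t p (r, z, t) + bt * F (p (r, z, t))))"
  define Gr where "Gr = (\<lambda>(r, z, t). c0 ^ 4 * ((\<phi> (r, z) + t * \<psi> (r, z)) *
                   (d_r p (r, z, t) + 2 * m * p (r, z, t) / r)
                 - p (r, z, t) * (d2_r \<phi> (r, z) + t * d2_r \<psi> (r, z))))"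
  define Gz where "Gz = (\<lambda>(r, z, t). 2 * c0 ^ 3 * p (r, z, t) * \<psi> (r, z))"
  have Tt: "d_t Gt (r,z,t)
     = \<psi> (r,z) * (dl * d_t (d_t p) (r, z, t) + bt * F1 (p (r, z, t)) * d_t p (r, z, t) - 2 * c0 ^ 3 * d_z p (r, z, t))
       + (\<phi> (r, z) + t * \<psi> (r, z)) * (dl * d_t (d_t (d_t p)) (r,z,t) + bt * (F2 (p (r,z,t)) * d_t p (r,z,t) * d_t p (r,z,t) + F1 (p (r,z,t)) * d_t (d_t p) (r,z,t))
          - 2 * c0 ^ 3 * d_t (d_z p) (r,z,t))
       - \<psi> (r,z) * (dl * d_t (d_t p) (r,z,t) + bt * (F1 (p (r,z,t)) * d_t p (r,z,t)))"
  proof -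
    have "d_t Gt (r,z,t) = deriv (\<lambda>s. Gt (r,z,s)) t" by (simp add: d_t_def)
    also have "\<dots> = \<psi> (r,z) * (dl * d_t (d_t p) (r, z, t) + bt * F1 (p (r, z, t)) * d_t p (r, z, t) - 2 * c0 ^ 3 * d_z p (r, z, t))
       + (\<phi> (r, z) + t * \<psi> (r, z)) * (dl * d_t (d_t (d_t p)) (r,z,t) + bt * (F2 (p (r,z,t)) * d_t p (r,z,t) * d_t p (r,z,t) + F1 (p (r,z,t)) * d_t (d_t p) (r,z,t))
          - 2 * c0 ^ 3 * d_t (d_z p) (r,z,t))
       - \<psi> (r,z) * (dl * d_t (d_t p) (r,z,t) + bt * (F1 (p (r,z,t)) * d_t p (r,z,t)))"
      unfolding Gt_def F1_def[symmetric]
      apply simp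
      apply (rule DERIV_imp_deriv)
      apply (rule derivative_eq_intros CF CF1 Pt Ptt Pttt Pzt refl | simp)+
      apply (simp add: algebra_simps)
      done
    finally show ?thesis .
  qed
  have rne: "r \<noteq> 0" using r by simp
  have Tr: "d_r Gr (r,z,t) = c0 ^ 4 * ((d2_r \<phi> (r, z) + t * d2_r \<psi> (r, z)) * (d_r p (r, z, t) + 2 * m * p (r, z, t) / r)
      + (\<phi> (r, z) + t * \<psi> (r, z)) * (d_r (d_r p) (r, z, t) + 2 * m * d_r p (r, z, t) / r - 2 * m * p (r, z, t) / r ^ 2)
      - d_r p (r, z, t) * (d2_r \<phi> (r, z) + t * d2_r \<psi> (r, z))
      - p (r, z, t) * (d2_r (d2_r \<phi>) (r, z) + t * d2_r (d2_r \<psi>) (r, z)))"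
  proof -
    have "d_r Gr (r,z,t) = deriv (\<lambda>s. Gr (s,z,t)) r" by (simp add: d_r_def)
    also have "\<dots> = c0 ^ 4 * ((d2_r \<phi> (r, z) + t * d2_r \<psi> (r, z)) * (d_r p (r, z, t) + 2 * m * p (r, z, t) / r)
      + (\<phi> (r, z) + t * \<psi> (r, z)) * (d_r (d_r p) (r, z, t) + 2 * m * d_r p (r, z, t) / r - 2 * m * p (r, z, t) / r ^ 2)
      - d_r p (r, z, t) * (d2_r \<phi> (r, z) + t * d2_r \<psi> (r, z))
      - p (r, z, t) * (d2_r (d2_r \<phi>) (r, z) + t * d2_r (d2_r \<psi>) (r, z)))"
      unfolding Gr_def
      apply simp
      apply (rule DERIV_imp_deriv)
      apply (rule derivative_eq_intros Pr Prr Dphr Dpsr Dphrr Dpsrr refl | simp add: rne)+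
      using r apply (simp add: field_simps power2_eq_square)
      done
    finally show ?thesis .
  qed
  have Tz: "d_z Gz (r,z,t) = 2 * c0 ^ 3 * (d_z p (r,z,t) * \<psi> (r,z) + p (r,z,t) * d2_z \<psi> (r,z))"
  proof -
    have "d_z Gz (r,z,t) = deriv (\<lambda>s. Gz (r,s,t)) z" by (simp add: d_z_def)
    also have "\<dots> = 2 * c0 ^ 3 * (d_z p (r,z,t) * \<psi> (r,z) + p (r,z,t) * d2_z \<psi> (r,z))"
      unfolding Gz_def
      apply simp
      apply (rule DERIV_imp_deriv)
      apply (rule derivative_eq_intros Pz Dpsz refl | simp)+
      apply (simp add: algebra_simps)
      done
    finally show ?thesis .
  qed
  have pde': "c0 ^ 4 * (d_r (d_r p) (r, z, t) + 2 * m * d_r p (r, z, t) / r)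
          + dl * d_t (d_t (d_t p)) (r, z, t)
          + bt * (F2 (p (r,z,t)) * d_t p (r,z,t) * d_t p (r,z,t) + F1 (p (r,z,t)) * d_t (d_t p) (r,z,t))
          - 2 * c0 ^ 3 * d_t (d_z p) (r, z, t) = 0"
    using pde[rule_format, OF r, of z t] unfolding Ftt sw .
  have o1: "d2_r (d2_r \<phi>) (r, z) = 2 / c0 * d2_z \<psi> (r, z) + 2 * m / r * d2_r \<phi> (r, z) - 2 * m / r ^ 2 * \<phi> (r, z)"
    using ode1 r by (simp add: algebra_simps)
  have o2: "d2_r (d2_r \<psi>) (r, z) = 2 * m / r * d2_r \<psi> (r, z) - 2 * m / r ^ 2 * \<psi> (r, z)"
    using ode2 r by (simp add: algebra_simps)
  have "d_t Gt (r,z,t) + d_r Gr (r,z,t) + d_z Gz (r,z,t) = 0"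
  proof -
    have "d_t Gt (r,z,t) + d_r Gr (r,z,t) + d_z Gz (r,z,t) =
       (\<phi> (r, z) + t * \<psi> (r, z)) * (c0 ^ 4 * (d_r (d_r p) (r, z, t) + 2 * m * d_r p (r, z, t) / r)
          + dl * d_t (d_t (d_t p)) (r, z, t)
          + bt * (F2 (p (r,z,t)) * d_t p (r,z,t) * d_t p (r,z,t) + F1 (p (r,z,t)) * d_t (d_t p) (r,z,t))
          - 2 * c0 ^ 3 * d_t (d_z p) (r, z, t))"
      unfolding Tt Tr Tz o1 o2 using r c0 by (simp add: field_simps power2_eq_square power3_eq_cube power4_eq_xxxx)
    also have "\<dots> = 0" using pde' by simp
    finally show ?thesis .
  qed
  thus ?thesis unfolding Gt_def Gr_def Gz_def .
qed


theorem mainTheorem4: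
  fixes c0 dl bt m :: real and F :: "real \<Rightarrow> real"
  assumes c0_pos: "c0 > 0" and dl_pos: "dl > 0" and bt_pos: "bt > 0"
    and F_smooth: "Cinf_on UNIV F"
    and F2_nz: "\<forall>q. deriv (deriv F) q \<noteq> 0"
  shows
   "(\<forall>Lam :: pt \<times> (real \<times> real \<times> real \<times> real) \<Rightarrow> real.
       Cinf_on {y. fst (fst y) > 0} Lam \<longrightarrow>
       (is_multiplier c0 dl bt m F Lam \<longleftrightarrow>
         (\<exists>\<phi> \<psi> :: real \<times> real \<Rightarrow> real.
            Cinf_on {w. fst w > 0} \<phi> \<and> Cinf_on {w. fst w > 0} \<psi> \<and>
            (\<forall>r z t w. r > 0 \<longrightarrow> Lam ((r, z, t), w) = \<phi> (r, z) + t * \<psi> (r, z)) \<and>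
            (\<forall>r z. r > 0 \<longrightarrow>
               d2_r (d2_r \<phi>) (r, z) - 2 * m / r * d2_r \<phi> (r, z) + 2 * m / r ^ 2 * \<phi> (r, z)
                 = 2 / c0 * d2_z \<psi> (r, z)) \<and>
            (\<forall>r z. r > 0 \<longrightarrow>
               d2_r (d2_r \<psi>) (r, z) - 2 * m / r * d2_r \<psi> (r, z) + 2 * m / r ^ 2 * \<psi> (r, z)
                 = 0))))
    \<and>
    (\<forall>(\<phi> :: real \<times> real \<Rightarrow> real) (\<psi> :: real \<times> real \<Rightarrow> real) (p :: pt \<Rightarrow> real).
       Cinf_on {w. fst w > 0} \<phi> \<and> Cinf_on {w. fst w > 0} \<psi> \<and>
       (\<forall>r z. r > 0 \<longrightarrow>
          d2_r (d2_r \<phi>) (r, z) - 2 * m / r * d2_r \<phi> (r, z) + 2 * m / r ^ 2 * \<phi> (r, z)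
            = 2 / c0 * d2_z \<psi> (r, z)) \<and>
       (\<forall>r z. r > 0 \<longrightarrow>
          d2_r (d2_r \<psi>) (r, z) - 2 * m / r * d2_r \<psi> (r, z) + 2 * m / r ^ 2 * \<psi> (r, z) = 0) \<and>
       Cinf_on {x. fst x > 0} p \<and>
       (\<forall>r z t. r > 0 \<longrightarrow>
          c0 ^ 4 * (d_r (d_r p) (r, z, t) + 2 * m * d_r p (r, z, t) / r)
          + dl * d_t (d_t (d_t p)) (r, z, t)
          + bt * d_t (d_t (\<lambda>x. F (p x))) (r, z, t)
          - 2 * c0 ^ 3 * d_z (d_t p) (r, z, t) = 0)
     \<longrightarrow>
       (let Tt = (\<lambda>(r, z, t). (\<phi> (r, z) + t * \<psi> (r, z)) *
                   (dl * d_t (d_t p) (r, z, t) + bt * deriv F (p (r, z, t)) * d_t p (r, z, t)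
                    - 2 * c0 ^ 3 * d_z p (r, z, t))
                 - \<psi> (r, z) * (dl * d_t p (r, z, t) + bt * F (p (r, z, t))));
            Tr = (\<lambda>(r, z, t). c0 ^ 4 * ((\<phi> (r, z) + t * \<psi> (r, z)) *
                   (d_r p (r, z, t) + 2 * m * p (r, z, t) / r)
                 - p (r, z, t) * (d2_r \<phi> (r, z) + t * d2_r \<psi> (r, z))));
            Tz = (\<lambda>(r, z, t). 2 * c0 ^ 3 * p (r, z, t) * \<psi> (r, z))
        in \<forall>r z t. r > 0 \<longrightarrow> d_t Tt (r, z, t) + d_r Tr (r, z, t) + d_z Tz (r, z, t) = 0))"
proof -
  note FF = F_facts[OF F_smooth]
  have dF: "\<And>x. F differentiable (at x)" and dF1: "\<And>x. deriv F differentiable (at x)"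
    and dF2: "\<And>x. deriv (deriv F) differentiable (at x)" using FF by auto
  show ?thesis
  proof (intro conjI allI impI)
    fix Lam :: "pt \<times> (real \<times> real \<times> real \<times> real) \<Rightarrow> real"
    assume cL: "Cinf_on {y. fst (fst y) > 0} Lam"
    show "is_multiplier c0 dl bt m F Lam \<longleftrightarrow>
         (\<exists>\<phi> \<psi> :: real \<times> real \<Rightarrow> real.
            Cinf_on {w. fst w > 0} \<phi> \<and> Cinf_on {w. fst w > 0} \<psi> \<and>
            (\<forall>r z t w. r > 0 \<longrightarrow> Lam ((r, z, t), w) = \<phi> (r, z) + t * \<psi> (r, z)) \<and>
            (\<forall>r z. r > 0 \<longrightarrow>
               d2_r (d2_r \<phi>) (r, z) - 2 * m / r * d2_r \<phi> (r, z) + 2 * m / r ^ 2 * \<phi> (r, z)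
                 = 2 / c0 * d2_z \<psi> (r, z)) \<and>
            (\<forall>r z. r > 0 \<longrightarrow>
               d2_r (d2_r \<psi>) (r, z) - 2 * m / r * d2_r \<psi> (r, z) + 2 * m / r ^ 2 * \<psi> (r, z)
                 = 0))"
    proof
      assume "is_multiplier c0 dl bt m F Lam"
      thus "\<exists>\<phi> \<psi> :: real \<times> real \<Rightarrow> real.
            Cinf_on {w. fst w > 0} \<phi> \<and> Cinf_on {w. fst w > 0} \<psi> \<and>
            (\<forall>r z t w. r > 0 \<longrightarrow> Lam ((r, z, t), w) = \<phi> (r, z) + t * \<psi> (r, z)) \<and>
            (\<forall>r z. r > 0 \<longrightarrow>
               d2_r (d2_r \<phi>) (r, z) - 2 * m / r * d2_r \<phi> (r, z) + 2 * m / r ^ 2 * \<phi> (r, z)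
                 = 2 / c0 * d2_z \<psi> (r, z)) \<and>
            (\<forall>r z. r > 0 \<longrightarrow>
               d2_r (d2_r \<psi>) (r, z) - 2 * m / r * d2_r \<psi> (r, z) + 2 * m / r ^ 2 * \<psi> (r, z)
                 = 0)"
        by (rule multiplier_only_if[OF c0_pos dl_pos bt_pos dF dF1 dF2 F2_nz cL])
    next
      assume "\<exists>\<phi> \<psi> :: real \<times> real \<Rightarrow> real.
            Cinf_on {w. fst w > 0} \<phi> \<and> Cinf_on {w. fst w > 0} \<psi> \<and>
            (\<forall>r z t w. r > 0 \<longrightarrow> Lam ((r, z, t), w) = \<phi> (r, z) + t * \<psi> (r, z)) \<and>
            (\<forall>r z. r > 0 \<longrightarrow>
               d2_r (d2_r \<phi>) (r, z) - 2 * m / r * d2_r \<phi> (r, z) + 2 * m / r ^ 2 * \<phi> (r, z)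
                 = 2 / c0 * d2_z \<psi> (r, z)) \<and>
            (\<forall>r z. r > 0 \<longrightarrow>
               d2_r (d2_r \<psi>) (r, z) - 2 * m / r * d2_r \<psi> (r, z) + 2 * m / r ^ 2 * \<psi> (r, z)
                 = 0)"
      then obtain \<phi> \<psi> :: "real \<times> real \<Rightarrow> real" where h:
            "Cinf_on {w. fst w > 0} \<phi>" "Cinf_on {w. fst w > 0} \<psi>"
            "\<forall>r z t w. r > 0 \<longrightarrow> Lam ((r, z, t), w) = \<phi> (r, z) + t * \<psi> (r, z)"
            "\<forall>r z. r > 0 \<longrightarrow>
               d2_r (d2_r \<phi>) (r, z) - 2 * m / r * d2_r \<phi> (r, z) + 2 * m / r ^ 2 * \<phi> (r, z)
                 = 2 / c0 * d2_z \<psi> (r, z)"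
            "\<forall>r z. r > 0 \<longrightarrow>
               d2_r (d2_r \<psi>) (r, z) - 2 * m / r * d2_r \<psi> (r, z) + 2 * m / r ^ 2 * \<psi> (r, z)
                 = 0" by blast
      show "is_multiplier c0 dl bt m F Lam"
        by (rule multiplier_if[OF c0_pos dF dF1 dF2 h])
    qed
  next
    fix \<phi> \<psi> :: "real \<times> real \<Rightarrow> real" and p :: "pt \<Rightarrow> real"
    assume H: "Cinf_on {w. fst w > 0} \<phi> \<and> Cinf_on {w. fst w > 0} \<psi> \<and>
       (\<forall>r z. r > 0 \<longrightarrow>
          d2_r (d2_r \<phi>) (r, z) - 2 * m / r * d2_r \<phi> (r, z) + 2 * m / r ^ 2 * \<phi> (r, z)
            = 2 / c0 * d2_z \<psi> (r, z)) \<and>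
       (\<forall>r z. r > 0 \<longrightarrow>
          d2_r (d2_r \<psi>) (r, z) - 2 * m / r * d2_r \<psi> (r, z) + 2 * m / r ^ 2 * \<psi> (r, z) = 0) \<and>
       Cinf_on {x. fst x > 0} p \<and>
       (\<forall>r z t. r > 0 \<longrightarrow>
          c0 ^ 4 * (d_r (d_r p) (r, z, t) + 2 * m * d_r p (r, z, t) / r)
          + dl * d_t (d_t (d_t p)) (r, z, t)
          + bt * d_t (d_t (\<lambda>x. F (p x))) (r, z, t)
          - 2 * c0 ^ 3 * d_z (d_t p) (r, z, t) = 0)"
    show "let Tt = (\<lambda>(r, z, t). (\<phi> (r, z) + t * \<psi> (r, z)) *
                   (dl * d_t (d_t p) (r, z, t) + bt * deriv F (p (r, z, t)) * d_t p (r, z, t)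
                    - 2 * c0 ^ 3 * d_z p (r, z, t))
                 - \<psi> (r, z) * (dl * d_t p (r, z, t) + bt * F (p (r, z, t))));
            Tr = (\<lambda>(r, z, t). c0 ^ 4 * ((\<phi> (r, z) + t * \<psi> (r, z)) *
                   (d_r p (r, z, t) + 2 * m * p (r, z, t) / r)
                 - p (r, z, t) * (d2_r \<phi> (r, z) + t * d2_r \<psi> (r, z))));
            Tz = (\<lambda>(r, z, t). 2 * c0 ^ 3 * p (r, z, t) * \<psi> (r, z))
        in \<forall>r z t. r > 0 \<longrightarrow> d_t Tt (r, z, t) + d_r Tr (r, z, t) + d_z Tz (r, z, t) = 0"
      unfolding Let_def
    proof (intro allI impI)
      fix r z t :: real assume r: "r > 0"
      show "d_t (\<lambda>(r, z, t). (\<phi> (r, z) + t * \<psi> (r, z)) *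
                   (dl * d_t (d_t p) (r, z, t) + bt * deriv F (p (r, z, t)) * d_t p (r, z, t)
                    - 2 * c0 ^ 3 * d_z p (r, z, t))
                 - \<psi> (r, z) * (dl * d_t p (r, z, t) + bt * F (p (r, z, t)))) (r,z,t)
     + d_r (\<lambda>(r, z, t). c0 ^ 4 * ((\<phi> (r, z) + t * \<psi> (r, z)) *
                   (d_r p (r, z, t) + 2 * m * p (r, z, t) / r)
                 - p (r, z, t) * (d2_r \<phi> (r, z) + t * d2_r \<psi> (r, z)))) (r,z,t)
     + d_z (\<lambda>(r, z, t). 2 * c0 ^ 3 * p (r, z, t) * \<psi> (r, z)) (r,z,t) = 0"
        using H by (intro conservation[OF c0_pos dF dF1 _ _ _ _ _ _ r]) auto
    qed
  qed
qed

end
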